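(* Let $R$ be a complex superalgebra of type $(2,1)$ which is right alternative and nontrivial. Then $R$ is isomorphic to one of the following superalgebras, written in a homogeneous basis $e_1,e_2$ (even), $f_1$ (odd) by listing their nonzero products (all unlisted products of basis elements are zero): $\mathbf{R}_{01}$: $e_1e_1=e_1,\ e_2e_2=e_2$; $\mathbf{R}_{02}$: $e_1e_1=e_1,\ e_2e_2=e_2,\ e_1f_1=f_1,\ f_1e_1=f_1$; $\mathbf{R}_{03}$: $e_1e_1=e_1,\ e_2e_2=e_2,\ e_1f_1=f_1,\ f_1e_1=f_1,\ f_1f_1=e_1$; $\mathbf{R}_{04}$: $e_1e_1=e_1,\ e_2e_2=e_2,\ f_1e_1=f_1$; $\mathbf{R}_{05}$: $e_1e_1=e_1,\ e_2e_2=e_2,\ e_1f_1=f_1$; $\mathbf{R}_{06}$: $e_1e_1=e_1,\ e_2e_2=e_2,\ e_1f_1=f_1,\ f_1f_1=e_1$; $\mathbf{R}_{07}$: $e_1e_1=e_1,\ e_2e_2=e_2,\ e_2f_1=f_1,\ f_1e_1=f_1$; $\mathbf{R}_{08}$: $e_1e_1=e_1,\ e_2e_2=e_2,\ e_2f_1=f_1,\ f_1e_1=f_1,\ f_1f_1=e_2$; $\mathbf{R}_{09}$: $e_1e_1=e_1$; $\mathbf{R}_{10}$: $e_1e_1=e_1,\ f_1f_1=e_2$; $\mathbf{R}_{11}$: $e_1e_1=e_1,\ f_1e_1=f_1$; $\mathbf{R}_{12}$: $e_1e_1=e_1,\ f_1e_1=f_1,\ f_1f_1=e_2$; $\mathbf{R}_{13}$: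 $e_1e_1=e_1,\ e_1f_1=f_1$; $\mathbf{R}_{14}$: $e_1e_1=e_1,\ e_1f_1=f_1,\ f_1f_1=e_1$; $\mathbf{R}_{15}$: $e_1e_1=e_1,\ e_1f_1=f_1,\ f_1e_1=f_1$; $\mathbf{R}_{16}$: $e_1e_1=e_1,\ e_1f_1=f_1,\ f_1e_1=f_1,\ f_1f_1=e_1$; $\mathbf{R}_{17}$: $e_1e_1=e_1,\ e_1e_2=e_2,\ e_2e_1=e_2$; $\mathbf{R}_{18}$: $e_1e_1=e_1,\ e_1e_2=e_2,\ e_2e_1=e_2,\ e_1f_1=f_1$; $\mathbf{R}_{19}$: $e_1e_1=e_1,\ e_1e_2=e_2,\ e_2e_1=e_2,\ e_1f_1=f_1,\ f_1f_1=e_2$; $\mathbf{R}_{20}$: $e_1e_1=e_1,\ e_1e_2=e_2,\ e_2e_1=e_2,\ f_1e_1=f_1$; $\mathbf{R}_{21}$: $e_1e_1=e_1,\ e_1e_2=e_2,\ e_2e_1=e_2,\ e_1f_1=f_1,\ f_1e_1=f_1$; $\mathbf{R}_{22}$: $e_1e_1=e_1,\ e_1e_2=e_2,\ e_2e_1=e_2,\ e_1f_1=f_1,\ f_1e_1=f_1,\ f_1f_1=e_2$; $\mathbf{R}_{23}$: $e_1e_1=e_1,\ e_1e_2=e_2$; $\mathbf{R}_{24}$: $e_1e_1=e_1,\ e_1e_2=e_2,\ f_1f_1=e_2$; $\mathbf{R}_{25}$: $e_1e_1=e_1,\ e_2e_1=e_2$; $\mathbf{R}_{26}$: $e_1e_1=e_1,\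 e_2e_1=e_2,\ e_1f_1=f_1$; $\mathbf{R}_{27}$: $e_1e_1=e_1,\ e_2e_1=e_2,\ e_1f_1=f_1,\ f_1f_1=e_1$; $\mathbf{R}_{28}$: $e_1e_1=e_1,\ e_2e_1=e_2,\ e_1f_1=f_1,\ f_1f_1=e_2$; $\mathbf{R}_{29}$: $e_1e_1=e_1,\ e_1e_2=e_2,\ f_1e_1=f_1$; $\mathbf{R}_{30}$: $e_1e_1=e_1,\ e_1e_2=e_2,\ f_1e_1=f_1,\ f_1f_1=e_2$; $\mathbf{R}_{31}$: $e_1e_1=e_1,\ e_2e_1=e_2,\ f_1e_1=f_1$; $\mathbf{R}_{32}$: $e_1e_1=e_1,\ e_1e_2=e_2,\ e_1f_1=f_1$; $\mathbf{R}_{33}$: $e_1e_1=e_1,\ e_2e_1=e_2,\ e_1f_1=f_1,\ f_1e_1=f_1$; $\mathbf{R}_{34}$: $e_1e_1=e_1,\ e_2e_1=e_2,\ e_1f_1=f_1,\ f_1e_1=f_1,\ f_1f_1=e_1$; $\mathbf{R}_{35}$: $e_1e_1=e_1,\ e_2e_1=e_2,\ e_1f_1=f_1,\ f_1e_1=f_1,\ f_1f_1=e_2$; $\mathbf{R}_{36}$: $e_1e_1=e_1,\ e_1e_2=e_2,\ e_1f_1=f_1,\ f_1e_1=f_1$; $\mathbf{R}_{37}$: $e_1e_1=e_2$; $\mathbf{R}_{38}$: $e_1e_1=e_2,\ f_1f_1=e_2$; $\mathbf{R}_{39}$: $f_1f_1=e_1$.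
   Context: All algebras are over $\mathbb{C}$. A superalgebra is a $\mathbb{Z}_2$-graded algebra $A=A_0\oplus A_1$ with $A_iA_j\subseteq A_{i+j \bmod 2}$; for a homogeneous element $x$, $|x|\in\{0,1\}$ denotes its degree. It has type $(n,m)$ if $\dim A_0=n$ and $\dim A_1=m$. Isomorphisms of superalgebras are grading-preserving algebra isomorphisms. The associator is $(x,y,z)=(xy)z-x(yz)$. A superalgebra is right alternative if $(x,y,z)=-(-1)^{|y||z|}(x,z,y)$ for all homogeneous $x,y,z$. A superalgebra is trivial if all its products are zero. *)

theory Defs
  imports "HOL-Analysis.Analysis"
begin

text \<open>A complex superalgebra of type (2,1) is modelled on the underlying space
  complex^3 with homogeneous basis e1 = axis 1 1, e2 = axis 2 1 (even) and
  f1 = axis 3 1 (odd).\<close>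

type_synonym sv = "complex ^ 3"

definition even_part :: "sv set" where
  "even_part = {x. x $ 3 = 0}"

definition odd_part :: "sv set" where
  "odd_part = {x. x $ 1 = 0 \<and> x $ 2 = 0}"

definition homog :: "nat \<Rightarrow> sv \<Rightarrow> bool" where
  "homog d x \<longleftrightarrow> (if d = 0 then x \<in> even_part else x \<in> odd_part)"

definition c_linear :: "(sv \<Rightarrow> sv) \<Rightarrow> bool" where
  "c_linear f \<longleftrightarrow> (\<forall>x y. f (x + y) = f x + f y) \<and> (\<forall>(c::complex) x. f (c *s x) = c *s f x)"

definition c_bilinear :: "(sv \<Rightarrow> sv \<Rightarrow> sv) \<Rightarrow> bool" where
  "c_bilinear m \<longleftrightarrow> (\<forall>x. c_linear (m x)) \<and> (\<forall>y. c_linear (\<lambda>x. m x y))"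

definition superalgebra :: "(sv \<Rightarrow> sv \<Rightarrow> sv) \<Rightarrow> bool" where
  "superalgebra m \<longleftrightarrow> c_bilinear m \<and>
     (\<forall>i j x y. i < 2 \<and> j < 2 \<and> homog i x \<and> homog j y \<longrightarrow> homog ((i + j) mod 2) (m x y))"

definition assoc :: "(sv \<Rightarrow> sv \<Rightarrow> sv) \<Rightarrow> sv \<Rightarrow> sv \<Rightarrow> sv \<Rightarrow> sv" where
  "assoc m x y z = m (m x y) z - m x (m y z)"

definition right_alternative :: "(sv \<Rightarrow> sv \<Rightarrow> sv) \<Rightarrow> bool" where
  "right_alternative m \<longleftrightarrow>
     (\<forall>i j k x y z. i < 2 \<and> j < 2 \<and> k < 2 \<and> homog i x \<and> homog j y \<and> homog k z \<longrightarrow>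
        assoc m x y z = - (((-1::complex) ^ (j * k)) *s assoc m x z y))"

definition trivial :: "(sv \<Rightarrow> sv \<Rightarrow> sv) \<Rightarrow> bool" where
  "trivial m \<longleftrightarrow> (\<forall>x y. m x y = 0)"

definition super_iso :: "(sv \<Rightarrow> sv \<Rightarrow> sv) \<Rightarrow> (sv \<Rightarrow> sv \<Rightarrow> sv) \<Rightarrow> bool" where
  "super_iso m1 m2 \<longleftrightarrow> (\<exists>\<phi>. c_linear \<phi> \<and> bij \<phi> \<and>
      \<phi> ` even_part = even_part \<and> \<phi> ` odd_part = odd_part \<and>
      (\<forall>x y. \<phi> (m1 x y) = m2 (\<phi> x) (\<phi> y)))"

text \<open>A multiplication table: a list of triples (i,j,k) meaning b_i b_j = b_k for the
  basis b_1 = e1, b_2 = e2, b_3 = f1; unlisted products of basis elements are zero.\<close>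
type_synonym table = "(3 \<times> 3 \<times> 3) list"

definition mult_of :: "table \<Rightarrow> sv \<Rightarrow> sv \<Rightarrow> sv" where
  "mult_of T x y = (\<Sum>(i, j, k) \<leftarrow> T. (x $ i * y $ j) *s axis k 1)"

definition R01 :: table where
  "R01 = [(1, 1, 1), (2, 2, 2)]"

definition R02 :: table where
  "R02 = [(1, 1, 1), (2, 2, 2), (1, 3, 3), (3, 1, 3)]"

definition R03 :: table where
  "R03 = [(1, 1, 1), (2, 2, 2), (1, 3, 3), (3, 1, 3), (3, 3, 1)]"

definition R04 :: table where
  "R04 = [(1, 1, 1), (2, 2, 2), (3, 1, 3)]"

definition R05 :: table where
  "R05 = [(1, 1, 1), (2, 2, 2), (1, 3, 3)]"

definition R06 :: table where
  "R06 = [(1, 1, 1), (2, 2, 2), (1, 3, 3), (3, 3, 1)]"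

definition R07 :: table where
  "R07 = [(1, 1, 1), (2, 2, 2), (2, 3, 3), (3, 1, 3)]"

definition R08 :: table where
  "R08 = [(1, 1, 1), (2, 2, 2), (2, 3, 3), (3, 1, 3), (3, 3, 2)]"

definition R09 :: table where
  "R09 = [(1, 1, 1)]"

definition R10 :: table where
  "R10 = [(1, 1, 1), (3, 3, 2)]"

definition R11 :: table where
  "R11 = [(1, 1, 1), (3, 1, 3)]"

definition R12 :: table where
  "R12 = [(1, 1, 1), (3, 1, 3), (3, 3, 2)]"

definition R13 :: table where
  "R13 = [(1, 1, 1), (1, 3, 3)]"

definition R14 :: table where
  "R14 = [(1, 1, 1), (1, 3, 3), (3, 3, 1)]"

definition R15 :: table where
  "R15 = [(1, 1, 1), (1, 3, 3), (3, 1, 3)]"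

definition R16 :: table where
  "R16 = [(1, 1, 1), (1, 3, 3), (3, 1, 3), (3, 3, 1)]"

definition R17 :: table where
  "R17 = [(1, 1, 1), (1, 2, 2), (2, 1, 2)]"

definition R18 :: table where
  "R18 = [(1, 1, 1), (1, 2, 2), (2, 1, 2), (1, 3, 3)]"

definition R19 :: table where
  "R19 = [(1, 1, 1), (1, 2, 2), (2, 1, 2), (1, 3, 3), (3, 3, 2)]"

definition R20 :: table where
  "R20 = [(1, 1, 1), (1, 2, 2), (2, 1, 2), (3, 1, 3)]"

definition R21 :: table where
  "R21 = [(1, 1, 1), (1, 2, 2), (2, 1, 2), (1, 3, 3), (3, 1, 3)]"

definition R22 :: table where
  "R22 = [(1, 1, 1), (1, 2, 2), (2, 1, 2), (1, 3, 3), (3, 1, 3), (3, 3, 2)]"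

definition R23 :: table where
  "R23 = [(1, 1, 1), (1, 2, 2)]"

definition R24 :: table where
  "R24 = [(1, 1, 1), (1, 2, 2), (3, 3, 2)]"

definition R25 :: table where
  "R25 = [(1, 1, 1), (2, 1, 2)]"

definition R26 :: table where
  "R26 = [(1, 1, 1), (2, 1, 2), (1, 3, 3)]"

definition R27 :: table where
  "R27 = [(1, 1, 1), (2, 1, 2), (1, 3, 3), (3, 3, 1)]"

definition R28 :: table where
  "R28 = [(1, 1, 1), (2, 1, 2), (1, 3, 3), (3, 3, 2)]"

definition R29 :: table where
  "R29 = [(1, 1, 1), (1, 2, 2), (3, 1, 3)]"

definition R30 :: table where
  "R30 = [(1, 1, 1), (1, 2, 2), (3, 1, 3), (3, 3, 2)]"

definition R31 :: table where
  "R31 = [(1, 1, 1), (2, 1, 2), (3, 1, 3)]"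

definition R32 :: table where
  "R32 = [(1, 1, 1), (1, 2, 2), (1, 3, 3)]"

definition R33 :: table where
  "R33 = [(1, 1, 1), (2, 1, 2), (1, 3, 3), (3, 1, 3)]"

definition R34 :: table where
  "R34 = [(1, 1, 1), (2, 1, 2), (1, 3, 3), (3, 1, 3), (3, 3, 1)]"

definition R35 :: table where
  "R35 = [(1, 1, 1), (2, 1, 2), (1, 3, 3), (3, 1, 3), (3, 3, 2)]"

definition R36 :: table where
  "R36 = [(1, 1, 1), (1, 2, 2), (1, 3, 3), (3, 1, 3)]"

definition R37 :: table where
  "R37 = [(1, 1, 2)]"

definition R38 :: table where
  "R38 = [(1, 1, 2), (3, 3, 2)]"

definition R39 :: table where
  "R39 = [(3, 3, 1)]"

definition R_list :: "table list" where
  "R_list = [R01, R02, R03, R04, R05, R06, R07, R08, R09, R10, R11, R12, R13, R14, R15, R16, R17, R18, R19, R20, R21, R22, R23, R24, R25, R26, R27, R28, R29, R30, R31, R32, R33, R34, R35, R36, R37, R38, R39]"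

end

theory Submission
  imports Defs
begin

definition det2 :: "sv \<Rightarrow> sv \<Rightarrow> complex" where
  "det2 x y = x$1 * y$2 - x$2 * y$1"

definition Bv :: "sv \<Rightarrow> sv \<Rightarrow> sv \<Rightarrow> 3 \<Rightarrow> sv" where
  "Bv E1 E2 F k = (if k = 1 then E1 else if k = 2 then E2 else F)"

definition psi :: "sv \<Rightarrow> sv \<Rightarrow> sv \<Rightarrow> sv \<Rightarrow> sv" where
  "psi E1 E2 F x = (\<Sum>k\<in>UNIV. x$k *s Bv E1 E2 F k)"

definition chi :: "sv \<Rightarrow> sv \<Rightarrow> sv \<Rightarrow> sv \<Rightarrow> sv" where
  "chi E1 E2 F y = (\<chi> i. if i = 1 then (y$1 * E2$2 - y$2 * E2$1) / det2 E1 E2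
      else if i = 2 then (E1$1 * y$2 - E1$2 * y$1) / det2 E1 E2 else y$3 / F$3)"

definition table_ok :: "(sv \<Rightarrow> sv \<Rightarrow> sv) \<Rightarrow> table \<Rightarrow> sv \<Rightarrow> sv \<Rightarrow> sv \<Rightarrow> bool" where
  "table_ok m T E1 E2 F \<longleftrightarrow> (\<forall>i j. m (Bv E1 E2 F i) (Bv E1 E2 F j) =
      sum_list (map (\<lambda>(a,b,k). if a = i \<and> b = j then Bv E1 E2 F k else 0) T))"

lemma sa_bil:
  assumes "superalgebra m"
  shows "m (x + y) z = m x z + m y z" "m x (y + z) = m x y + m x z"
    "m (c *s x) z = c *s m x z" "m x (c *s z) = c *s m x z"
  using assms unfolding superalgebra_def c_bilinear_def c_linear_def by auto

lemma sa_zero: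
  assumes "superalgebra m"
  shows "m 0 z = 0" "m x 0 = 0"
proof -
  have "m ((0::complex) *s 0) z = (0::complex) *s m 0 z" using sa_bil(3)[OF assms] by blast
  then show "m 0 z = 0" by simp
  have "m x ((0::complex) *s 0) = (0::complex) *s m x 0" using sa_bil(4)[OF assms] by blast
  then show "m x 0 = 0" by simp
qed

lemma sa_sum_left:
  assumes "superalgebra m"
  shows "m (\<Sum>i\<in>S. f i) z = (\<Sum>i\<in>S. m (f i) z)"
proof (induction S rule: infinite_finite_induct)
  case (infinite A) then show ?case using sa_zero[OF assms] by simp
next
  case empty then show ?case using sa_zero[OF assms] by simp
next
  case (insert x F) then show ?case using sa_bil[OF assms] by simp
qed

lemma sa_sum_right:
  assumes "superalgebra m"
  shows "m z (\<Sum>i\<in>S. f i) = (\<Sum>i\<in>S. m z (f i))"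
proof (induction S rule: infinite_finite_induct)
  case (infinite A) then show ?case using sa_zero[OF assms] by simp
next
  case empty then show ?case using sa_zero[OF assms] by simp
next
  case (insert x F) then show ?case using sa_bil[OF assms] by simp
qed

lemma psi_mult:
  assumes "superalgebra m"
  shows "m (psi E1 E2 F a) (psi E1 E2 F b) =
     (\<Sum>i\<in>UNIV. \<Sum>j\<in>UNIV. (a$i * b$j) *s m (Bv E1 E2 F i) (Bv E1 E2 F j))"
  unfolding psi_def sum_3 sa_bil[OF assms] by (simp add: vec_eq_iff forall_3 algebra_simps)

lemma psi_add: "psi E1 E2 F (x + y) = psi E1 E2 F x + psi E1 E2 F y"
  unfolding psi_def sum_3 by (simp add: vec_eq_iff forall_3 algebra_simps)

lemma psi_smult: "psi E1 E2 F (c *s x) = c *s psi E1 E2 F x"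
  unfolding psi_def sum_3 by (simp add: vec_eq_iff forall_3 algebra_simps)

lemma psi_axis: "psi E1 E2 F (axis k 1) = Bv E1 E2 F k"
  using exhaust_3[of k] unfolding psi_def sum_3 Bv_def
  by (auto simp: vec_eq_iff forall_3 axis_def)

lemma psi_zero: "psi E1 E2 F 0 = 0"
  unfolding psi_def by simp

lemma psi_mult_of:
  "psi E1 E2 F (mult_of T a b) = sum_list (map (\<lambda>(i,j,k). (a$i * b$j) *s Bv E1 E2 F k) T)"
  unfolding mult_of_def
proof (induction T)
  case Nil then show ?case by (simp add: psi_zero)
next
  case (Cons t T)
  obtain i j k where t: "t = (i,j,k)" by (cases t) auto
  show ?case using Cons by (simp add: t psi_add psi_smult psi_axis)
qed

lemma delta_sum:
  fixes p q :: 3 and a b :: sv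
  shows "(\<Sum>i\<in>UNIV. \<Sum>j\<in>UNIV. (a$i * b$j) *s (if p = i \<and> q = j then (v::sv) else 0)) = (a$p * b$q) *s v"
  using exhaust_3[of p] exhaust_3[of q] unfolding sum_3 by auto

lemma table_sum:
  fixes a b :: sv and T :: table
  shows "(\<Sum>i\<in>UNIV. \<Sum>j\<in>UNIV. (a$i * b$j) *s
      sum_list (map (\<lambda>(p,q,k). if p = i \<and> q = j then Bv E1 E2 F k else 0) T))
   = sum_list (map (\<lambda>(p,q,k). (a$p * b$q) *s Bv E1 E2 F k) T)"
proof (induction T)
  case Nil then show ?case by simp
next
  case (Cons t T)
  obtain p q k where t: "t = (p,q,k)" by (cases t) auto
  have "(\<Sum>i\<in>UNIV. \<Sum>j\<in>UNIV. (a$i * b$j) *s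
      sum_list (map (\<lambda>(p,q,k). if p = i \<and> q = j then Bv E1 E2 F k else 0) (t # T)))
    = (\<Sum>i\<in>UNIV. \<Sum>j\<in>UNIV. (a$i * b$j) *s (if p = i \<and> q = j then Bv E1 E2 F k else 0))
      + (\<Sum>i\<in>UNIV. \<Sum>j\<in>UNIV. (a$i * b$j) *s
      sum_list (map (\<lambda>(p,q,k). if p = i \<and> q = j then Bv E1 E2 F k else 0) T))"
    by (simp add: t vec.scale_right_distrib sum.distrib)
  also have "\<dots> = (a$p * b$q) *s Bv E1 E2 F k + sum_list (map (\<lambda>(p,q,k). (a$p * b$q) *s Bv E1 E2 F k) T)"
    by (simp only: Cons.IH delta_sum)
  finally show ?case by (simp add: t)
qed

lemma chi_psi:
  assumes "E1 \<in> even_part" "E2 \<in> even_part" "F \<in> odd_part" "det2 E1 E2 \<noteq> 0" "F$3 \<noteq> 0"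
  shows "chi E1 E2 F (psi E1 E2 F x) = x"
  using assms unfolding chi_def psi_def sum_3 Bv_def even_part_def odd_part_def det2_def
  by (simp add: vec_eq_iff forall_3 field_simps)

lemma psi_chi:
  assumes "E1 \<in> even_part" "E2 \<in> even_part" "F \<in> odd_part" "det2 E1 E2 \<noteq> 0" "F$3 \<noteq> 0"
  shows "psi E1 E2 F (chi E1 E2 F x) = x"
  using assms unfolding chi_def psi_def sum_3 Bv_def even_part_def odd_part_def
  by (simp add: vec_eq_iff forall_3 field_simps) (simp add: det2_def algebra_simps)

lemma chi_lin: "c_linear (chi E1 E2 F)"
  unfolding c_linear_def chi_def
  by (simp add: vec_eq_iff forall_3 field_simps) (simp add: algebra_simps add_divide_distrib diff_divide_distrib)

lemma iso_basis:
  assumes sa: "superalgebra m" and E: "E1 \<in> even_part" "E2 \<in> even_part" "F \<in> odd_part"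
    "det2 E1 E2 \<noteq> 0" "F$3 \<noteq> 0" and tab: "table_ok m T E1 E2 F"
  shows "super_iso m (mult_of T)"
proof -
  let ?psi = "psi E1 E2 F" and ?phi = "chi E1 E2 F"
  have key: "?psi (mult_of T a b) = m (?psi a) (?psi b)" for a b
    unfolding psi_mult_of psi_mult[OF sa] using tab unfolding table_ok_def
    by (simp add: table_sum)
  have cp: "?phi (?psi x) = x" for x using chi_psi[OF E] .
  have pc: "?psi (?phi x) = x" for x using psi_chi[OF E] .
  have bij: "bij ?phi" by (rule o_bij[where g="?psi"]) (auto simp: cp pc)
  have pe: "?psi y \<in> even_part" if "y \<in> even_part" for y
    using that E unfolding even_part_def odd_part_def psi_def sum_3 Bv_def by simp
  have po: "?psi y \<in> odd_part" if "y \<in> odd_part" for y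
    using that E unfolding even_part_def odd_part_def psi_def sum_3 Bv_def by simp
  have ce: "?phi y \<in> even_part" if "y \<in> even_part" for y
    using that E unfolding even_part_def odd_part_def chi_def by simp
  have co: "?phi y \<in> odd_part" if "y \<in> odd_part" for y
    using that E unfolding even_part_def odd_part_def chi_def by simp
  have ie: "?phi ` even_part = even_part"
  proof
    show "?phi ` even_part \<subseteq> even_part" using ce by auto
    show "even_part \<subseteq> ?phi ` even_part"
    proof
      fix y assume "y \<in> even_part"
      then show "y \<in> ?phi ` even_part" using pe cp by (metis image_eqI)
    qed
  qed
  have io: "?phi ` odd_part = odd_part"
  proof
    show "?phi ` odd_part \<subseteq> odd_part" using co by auto
    show "odd_part \<subseteq> ?phi ` odd_part"
    proof
      fix y assume "y \<in> odd_part"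
      then show "y \<in> ?phi ` odd_part" using po cp by (metis image_eqI)
    qed
  qed
  have hom: "?phi (m x y) = mult_of T (?phi x) (?phi y)" for x y
    using key[of "?phi x" "?phi y"] by (metis cp pc)
  show ?thesis unfolding super_iso_def
    using chi_lin bij ie io hom by blast
qed

definition f0 :: sv where "f0 = axis 3 1"
definition lam :: "(sv \<Rightarrow> sv \<Rightarrow> sv) \<Rightarrow> sv \<Rightarrow> complex" where "lam m z = (m z f0) $ 3"
definition rho :: "(sv \<Rightarrow> sv \<Rightarrow> sv) \<Rightarrow> sv \<Rightarrow> complex" where "rho m z = (m f0 z) $ 3"

lemma f0_odd: "f0 \<in> odd_part" unfolding f0_def odd_part_def by (simp add: axis_def)
lemma f0_3: "f0 $ 3 = 1" unfolding f0_def by simp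

lemma homog0: "homog 0 x \<longleftrightarrow> x \<in> even_part" by (simp add: homog_def)
lemma homog1: "homog 1 x \<longleftrightarrow> x \<in> odd_part" by (simp add: homog_def)

lemma sa_grade:
  assumes "superalgebra m"
  shows "x \<in> even_part \<Longrightarrow> y \<in> even_part \<Longrightarrow> m x y \<in> even_part"
    "x \<in> even_part \<Longrightarrow> y \<in> odd_part \<Longrightarrow> m x y \<in> odd_part"
    "x \<in> odd_part \<Longrightarrow> y \<in> even_part \<Longrightarrow> m x y \<in> odd_part"
    "x \<in> odd_part \<Longrightarrow> y \<in> odd_part \<Longrightarrow> m x y \<in> even_part"
proof -
  have g: "\<And>i j x y. i < 2 \<Longrightarrow> j < 2 \<Longrightarrow> homog i x \<Longrightarrow> homog j y \<Longrightarrow> homog ((i + j) mod 2) (m x y)"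
    using assms unfolding superalgebra_def by blast
  show "x \<in> even_part \<Longrightarrow> y \<in> even_part \<Longrightarrow> m x y \<in> even_part"
    using g[of 0 0 x y] by (simp add: homog_def)
  show "x \<in> even_part \<Longrightarrow> y \<in> odd_part \<Longrightarrow> m x y \<in> odd_part"
    using g[of 0 1 x y] by (simp add: homog_def)
  show "x \<in> odd_part \<Longrightarrow> y \<in> even_part \<Longrightarrow> m x y \<in> odd_part"
    using g[of 1 0 x y] by (simp add: homog_def)
  show "x \<in> odd_part \<Longrightarrow> y \<in> odd_part \<Longrightarrow> m x y \<in> even_part"
    using g[of 1 1 x y] by (simp add: homog_def)
qed

lemma odd_eq: "v \<in> odd_part \<Longrightarrow> v = (v $ 3) *s f0"
  unfolding odd_part_def f0_def by (auto simp: vec_eq_iff forall_3 axis_def)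

lemma m_e_f0: "superalgebra m \<Longrightarrow> z \<in> even_part \<Longrightarrow> m z f0 = lam m z *s f0"
  unfolding lam_def using odd_eq sa_grade(2) f0_odd by blast
lemma m_f0_e: "superalgebra m \<Longrightarrow> z \<in> even_part \<Longrightarrow> m f0 z = rho m z *s f0"
  unfolding rho_def using odd_eq sa_grade(3) f0_odd by blast
lemma u_even: "superalgebra m \<Longrightarrow> m f0 f0 \<in> even_part"
  using sa_grade(4) f0_odd by blast

lemma ra_inst:
  assumes "right_alternative m"
  shows "x \<in> even_part \<Longrightarrow> y \<in> even_part \<Longrightarrow> z \<in> even_part \<Longrightarrow> assoc m x y z = - assoc m x z y"
    "y \<in> even_part \<Longrightarrow> z \<in> even_part \<Longrightarrow> assoc m f0 y z = - assoc m f0 z y"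
    "x \<in> even_part \<Longrightarrow> z \<in> even_part \<Longrightarrow> assoc m x f0 z = - assoc m x z f0"
    "z \<in> even_part \<Longrightarrow> assoc m f0 f0 z = - assoc m f0 z f0"
proof -
  have g: "\<And>i j k x y z. i < 2 \<Longrightarrow> j < 2 \<Longrightarrow> k < 2 \<Longrightarrow> homog i x \<Longrightarrow> homog j y \<Longrightarrow> homog k z \<Longrightarrow>
        assoc m x y z = - (((-1::complex) ^ (j * k)) *s assoc m x z y)"
    using assms unfolding right_alternative_def by blast
  show "x \<in> even_part \<Longrightarrow> y \<in> even_part \<Longrightarrow> z \<in> even_part \<Longrightarrow> assoc m x y z = - assoc m x z y"
    using g[of 0 0 0 x y z] by (simp add: homog_def)
  show "y \<in> even_part \<Longrightarrow> z \<in> even_part \<Longrightarrow> assoc m f0 y z = - assoc m f0 z y"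
    using g[of 1 0 0 f0 y z] f0_odd by (simp add: homog_def)
  show "x \<in> even_part \<Longrightarrow> z \<in> even_part \<Longrightarrow> assoc m x f0 z = - assoc m x z f0"
    using g[of 0 1 0 x f0 z] f0_odd by (simp add: homog_def)
  show "z \<in> even_part \<Longrightarrow> assoc m f0 f0 z = - assoc m f0 z f0"
    using g[of 1 1 0 f0 f0 z] f0_odd by (simp add: homog_def)
qed

lemma even_add: "x \<in> even_part \<Longrightarrow> y \<in> even_part \<Longrightarrow> x + y \<in> even_part"
  and even_smult: "x \<in> even_part \<Longrightarrow> c *s x \<in> even_part"
  and even_zero: "0 \<in> even_part"
  unfolding even_part_def by auto

lemma lam_lin: assumes "superalgebra m" shows "lam m (a *s x + b *s y) = a * lam m x + b * lam m y"
  unfolding lam_def by (simp add: sa_bil[OF assms])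
lemma rho_lin: assumes "superalgebra m" shows "rho m (a *s x + b *s y) = a * rho m x + b * rho m y"
  unfolding rho_def by (simp add: sa_bil[OF assms])

lemma lam_mult:
  assumes sa: "superalgebra m" and ra: "right_alternative m" and x: "x \<in> even_part" and z: "z \<in> even_part"
  shows "lam m (m x z) = lam m x * lam m z"
proof -
  have xz: "m x z \<in> even_part" using sa_grade(1)[OF sa x z] .
  have "assoc m x f0 z = - assoc m x z f0" using ra_inst(3)[OF ra x z] .
  then have "(assoc m x f0 z) $ 3 = (- assoc m x z f0) $ 3" by simp
  then show ?thesis unfolding assoc_def
    using m_e_f0[OF sa x] m_f0_e[OF sa z] m_e_f0[OF sa xz] m_e_f0[OF sa z] sa_bil[OF sa]
    by (simp add: f0_3 mult.commute)
qed

lemma rho_sym: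
  assumes sa: "superalgebra m" and ra: "right_alternative m" and y: "y \<in> even_part" and z: "z \<in> even_part"
  shows "rho m (m y z) + rho m (m z y) = 2 * rho m y * rho m z"
proof -
  have yz: "m y z \<in> even_part" "m z y \<in> even_part" using sa_grade(1)[OF sa] y z by auto
  have "assoc m f0 y z = - assoc m f0 z y" using ra_inst(2)[OF ra y z] .
  then have "(assoc m f0 y z) $ 3 = (- assoc m f0 z y) $ 3" by simp
  then show ?thesis unfolding assoc_def
    using m_f0_e[OF sa y] m_f0_e[OF sa z] m_f0_e[OF sa yz(1)] m_f0_e[OF sa yz(2)] sa_bil[OF sa]
    by (simp add: f0_3 algebra_simps)
qed

lemma u_left:
  assumes sa: "superalgebra m" and ra: "right_alternative m" and z: "z \<in> even_part"
  shows "m (m f0 f0) z = lam m z *s m f0 f0"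
proof -
  have "assoc m f0 f0 z = - assoc m f0 z f0" using ra_inst(4)[OF ra z] .
  then show ?thesis unfolding assoc_def
    using m_f0_e[OF sa z] m_e_f0[OF sa z] sa_bil[OF sa]
    by (simp add: vec_eq_iff forall_3 algebra_simps)
qed

definition lc :: "sv \<Rightarrow> sv \<Rightarrow> complex \<Rightarrow> complex \<Rightarrow> sv" where
  "lc x y a b = a *s x + b *s y"

definition frame :: "(sv \<Rightarrow> sv \<Rightarrow> sv) \<Rightarrow> sv \<Rightarrow> sv \<Rightarrow> complex \<Rightarrow> complex \<Rightarrow> complex \<Rightarrow> complex
   \<Rightarrow> complex \<Rightarrow> complex \<Rightarrow> complex \<Rightarrow> complex \<Rightarrow> bool" where
  "frame m x y k1 k2 k3 k4 k5 k6 k7 k8 \<longleftrightarrow> x \<in> even_part \<and> y \<in> even_part \<and> det2 x y \<noteq> 0 \<and>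
     m x x = lc x y k1 k2 \<and> m x y = lc x y k3 k4 \<and> m y x = lc x y k5 k6 \<and> m y y = lc x y k7 k8"

lemma lc_add: "lc x y a b + lc x y c d = lc x y (a + c) (b + d)"
  unfolding lc_def by (simp add: vec_eq_iff algebra_simps)
lemma lc_diff: "lc x y a b - lc x y c d = lc x y (a - c) (b - d)"
  unfolding lc_def by (simp add: vec_eq_iff algebra_simps)
lemma lc_neg: "- lc x y a b = lc x y (- a) (- b)"
  unfolding lc_def by (simp add: vec_eq_iff algebra_simps)
lemma lc_smult: "k *s lc x y a b = lc x y (k * a) (k * b)"
  unfolding lc_def by (simp add: vec_eq_iff algebra_simps)
lemma lc_lc: "lc (lc x y a b) (lc x y c d) p q = lc x y (p * a + q * c) (p * b + q * d)"
  unfolding lc_def by (simp add: vec_eq_iff algebra_simps)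
lemma lc_zero: "0 = lc x y 0 0" unfolding lc_def by simp
lemma lc_x: "x = lc x y 1 0" unfolding lc_def by simp
lemma lc_y: "y = lc x y 0 1" unfolding lc_def by simp
lemma lc_even: "x \<in> even_part \<Longrightarrow> y \<in> even_part \<Longrightarrow> lc x y a b \<in> even_part"
  unfolding lc_def even_part_def by simp

lemma det2_lc: "det2 (lc x y a b) (lc x y c d) = (a * d - b * c) * det2 x y"
  unfolding lc_def det2_def by (simp add: algebra_simps)

lemma lc_eq_iff:
  assumes "det2 x y \<noteq> 0"
  shows "lc x y a b = lc x y c d \<longleftrightarrow> a = c \<and> b = d"
proof
  assume h: "lc x y a b = lc x y c d"
  then have h1: "(a - c) * x$1 + (b - d) * y$1 = 0" and h2: "(a - c) * x$2 + (b - d) * y$2 = 0"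
    unfolding lc_def by (auto simp: vec_eq_iff algebra_simps dest: spec[of _ 1] spec[of _ 2])
  have "(a - c) * det2 x y = y$2 * ((a - c) * x$1 + (b - d) * y$1) - y$1 * ((a - c) * x$2 + (b - d) * y$2)"
    unfolding det2_def by (simp add: algebra_simps)
  then have "(a - c) * det2 x y = 0" using h1 h2 by simp
  then have ac: "a = c" using assms by simp
  have "(b - d) * det2 x y = x$1 * ((a - c) * x$2 + (b - d) * y$2) - x$2 * ((a - c) * x$1 + (b - d) * y$1)"
    unfolding det2_def by (simp add: algebra_simps)
  then have "(b - d) * det2 x y = 0" using h1 h2 by simp
  then have "b = d" using assms by simp
  then show "a = c \<and> b = d" using ac by simp
qed simp

lemma span2:
  assumes "x \<in> even_part" "y \<in> even_part" "z \<in> even_part" "det2 x y \<noteq> 0"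
  shows "z = lc x y (det2 z y / det2 x y) (det2 x z / det2 x y)"
  using assms unfolding lc_def even_part_def
  by (simp add: vec_eq_iff forall_3 field_simps) (simp add: det2_def algebra_simps)

lemma prod_frame:
  assumes sa: "superalgebra m" and fr: "frame m x y k1 k2 k3 k4 k5 k6 k7 k8"
  shows "m (lc x y a b) (lc x y c d) =
    lc x y (a*c*k1 + a*d*k3 + b*c*k5 + b*d*k7) (a*c*k2 + a*d*k4 + b*c*k6 + b*d*k8)"
  using fr unfolding frame_def
  apply (simp add: lc_def sa_bil[OF sa])
  apply (simp add: lc_def vec_eq_iff algebra_simps)
  done

lemma frame_det: "frame m x y k1 k2 k3 k4 k5 k6 k7 k8 \<Longrightarrow> det2 x y \<noteq> 0"
  unfolding frame_def by simp
lemma frame_even: "frame m x y k1 k2 k3 k4 k5 k6 k7 k8 \<Longrightarrow> x \<in> even_part \<and> y \<in> even_part"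
  unfolding frame_def by simp

lemma frame_change:
  assumes sa: "superalgebra m" and fr: "frame m x y k1 k2 k3 k4 k5 k6 k7 k8"
    and dt: "a * d - b * c \<noteq> 0"
    and e11: "m (lc x y a b) (lc x y a b) = lc x y (l1 * a + l2 * c) (l1 * b + l2 * d)"
    and e12: "m (lc x y a b) (lc x y c d) = lc x y (l3 * a + l4 * c) (l3 * b + l4 * d)"
    and e21: "m (lc x y c d) (lc x y a b) = lc x y (l5 * a + l6 * c) (l5 * b + l6 * d)"
    and e22: "m (lc x y c d) (lc x y c d) = lc x y (l7 * a + l8 * c) (l7 * b + l8 * d)"
  shows "frame m (lc x y a b) (lc x y c d) l1 l2 l3 l4 l5 l6 l7 l8"
  using fr dt e11 e12 e21 e22 unfolding frame_def
  by (simp add: lc_even det2_lc lc_lc)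

lemma frame_exists:
  assumes sa: "superalgebra m" and x: "x \<in> even_part" and y: "y \<in> even_part" and d: "det2 x y \<noteq> 0"
  shows "\<exists>k1 k2 k3 k4 k5 k6 k7 k8. frame m x y k1 k2 k3 k4 k5 k6 k7 k8"
  unfolding frame_def using x y d span2[OF x y _ d] sa_grade(1)[OF sa] by meson

lemma ra_lc:
  assumes sa: "superalgebra m" and ra: "right_alternative m" and fr: "frame m x y k1 k2 k3 k4 k5 k6 k7 k8"
  shows "assoc m (lc x y a1 b1) (lc x y a2 b2) (lc x y a3 b3) = - assoc m (lc x y a1 b1) (lc x y a3 b3) (lc x y a2 b2)"
  using ra_inst(1)[OF ra] lc_even frame_even[OF fr] by blast

lemma vneg_self: "(v::sv) = - v \<Longrightarrow> v = 0"
  by (simp add: vec_eq_iff forall_3)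

lemma ra_sq:
  assumes sa: "superalgebra m" and ra: "right_alternative m" and fr: "frame m x y k1 k2 k3 k4 k5 k6 k7 k8"
  shows "m (m (lc x y a1 b1) (lc x y a2 b2)) (lc x y a2 b2) = m (lc x y a1 b1) (m (lc x y a2 b2) (lc x y a2 b2))"
  using vneg_self[OF ra_lc[OF sa ra fr, of a1 b1 a2 b2 a2 b2]] unfolding assoc_def by simp

lemma case_b:
  assumes sa: "superalgebra m" and ra: "right_alternative m" and fr: "frame m x y 0 1 k3 k4 k5 k6 k7 k8"
  shows "k3 = k5 \<and> k4 = k6 \<and> k7 = k5 * k6 \<and> k8 = k5 + k6 * k6"
proof -
  note d = frame_det[OF fr]
  have 1: "k3 = k5 \<and> k4 = k6"
    using ra_sq[OF sa ra fr, of 1 0 1 0]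
    by (simp add: prod_frame[OF sa fr] lc_eq_iff[OF d])
  have 2: "k7 = k5 * k6 \<and> k8 = k5 + k6 * k6"
    using ra_sq[OF sa ra fr, of 0 1 1 0]
    by (simp add: prod_frame[OF sa fr] lc_eq_iff[OF d] mult.commute)
  show ?thesis using 1 2 by simp
qed

lemma frame_rel:
  assumes sa: "superalgebra m" and fr: "frame m x y k1 k2 k3 k4 k5 k6 k7 k8"
    and fr2: "frame m (lc x y a b) (lc x y c d) l1 l2 l3 l4 l5 l6 l7 l8"
  shows "a*a*k1 + a*b*k3 + b*a*k5 + b*b*k7 = l1 * a + l2 * c \<and> a*a*k2 + a*b*k4 + b*a*k6 + b*b*k8 = l1 * b + l2 * d \<and>
         a*c*k1 + a*d*k3 + b*c*k5 + b*d*k7 = l3 * a + l4 * c \<and> a*c*k2 + a*d*k4 + b*c*k6 + b*d*k8 = l3 * b + l4 * d \<and>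
         c*a*k1 + c*b*k3 + d*a*k5 + d*b*k7 = l5 * a + l6 * c \<and> c*a*k2 + c*b*k4 + d*a*k6 + d*b*k8 = l5 * b + l6 * d \<and>
         c*c*k1 + c*d*k3 + d*c*k5 + d*d*k7 = l7 * a + l8 * c \<and> c*c*k2 + c*d*k4 + d*c*k6 + d*d*k8 = l7 * b + l8 * d"
  using fr2 unfolding frame_def[of m "lc x y a b"] prod_frame[OF sa fr] lc_lc lc_eq_iff[OF frame_det[OF fr]]
  by simp

lemma frame_change_arith:
  assumes sa: "superalgebra m" and fr: "frame m x y k1 k2 k3 k4 k5 k6 k7 k8"
    and dt: "a * d - b * c \<noteq> 0"
    and eqs: "a*a*k1 + a*b*k3 + b*a*k5 + b*b*k7 = l1 * a + l2 * c \<and> a*a*k2 + a*b*k4 + b*a*k6 + b*b*k8 = l1 * b + l2 * d \<and>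
         a*c*k1 + a*d*k3 + b*c*k5 + b*d*k7 = l3 * a + l4 * c \<and> a*c*k2 + a*d*k4 + b*c*k6 + b*d*k8 = l3 * b + l4 * d \<and>
         c*a*k1 + c*b*k3 + d*a*k5 + d*b*k7 = l5 * a + l6 * c \<and> c*a*k2 + c*b*k4 + d*a*k6 + d*b*k8 = l5 * b + l6 * d \<and>
         c*c*k1 + c*d*k3 + d*c*k5 + d*d*k7 = l7 * a + l8 * c \<and> c*c*k2 + c*d*k4 + d*c*k6 + d*d*k8 = l7 * b + l8 * d"
  shows "frame m (lc x y a b) (lc x y c d) l1 l2 l3 l4 l5 l6 l7 l8"
  using eqs by (intro frame_change[OF sa fr dt]) (simp_all add: prod_frame[OF sa fr] lc_eq_iff[OF frame_det[OF fr]])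

definition evtype :: "(sv \<Rightarrow> sv \<Rightarrow> sv) \<Rightarrow> sv \<Rightarrow> sv \<Rightarrow> bool" where
  "evtype m E1 E2 \<longleftrightarrow> frame m E1 E2 1 0 0 0 0 0 0 1 \<or> frame m E1 E2 1 0 0 0 0 0 0 0 \<or>
     frame m E1 E2 1 0 0 1 0 1 0 0 \<or> frame m E1 E2 1 0 0 1 0 0 0 0 \<or> frame m E1 E2 1 0 0 0 0 1 0 0 \<or>
     frame m E1 E2 0 1 0 0 0 0 0 0 \<or> frame m E1 E2 0 0 0 0 0 0 0 0"

lemma scale_CC:
  assumes sa: "superalgebra m" and fr: "frame m x y c1 0 0 0 0 0 0 c2" and c: "c1 \<noteq> 0" "c2 \<noteq> 0"
  shows "frame m (lc x y (1/c1) 0) (lc x y 0 (1/c2)) 1 0 0 0 0 0 0 1"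
  by (rule frame_change_arith[OF sa fr]) (use c in \<open>simp_all add: field_simps\<close>)

lemma case_b_roots:
  assumes sa: "superalgebra m"
    and fr: "frame m x y 0 1 (-r1*r2) (r1+r2) (-r1*r2) (r1+r2) ((-r1*r2)*(r1+r2)) (-r1*r2 + (r1+r2)*(r1+r2))"
    and r1: "r1 \<noteq> 0"
  shows "\<exists>E1 E2. evtype m E1 E2"
proof (cases "r2 = 0")
  case True
  have "frame m (lc x y 0 (1/(r1*r1))) (lc x y 1 (-1/r1)) 1 0 0 0 0 0 0 0"
    by (rule frame_change_arith[OF sa fr]) (use r1 True in \<open>simp_all add: field_simps\<close>)
  then show ?thesis unfolding evtype_def by blast
next
  case r2: False
  show ?thesis
  proof (cases "r2 = r1")
    case True
    have "frame m (lc x y (2/r1) (-1/(r1*r1))) (lc x y (-1) (1/r1)) 1 0 0 1 0 1 0 0"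
      by (rule frame_change_arith[OF sa fr]) (use r1 True in \<open>simp_all add: field_simps\<close>)
    then show ?thesis unfolding evtype_def by blast
  next
    case False
    have d: "r1 - r2 \<noteq> 0" "r2 - r1 \<noteq> 0" using False by auto
    have "frame m (lc x y (-r2) 1) (lc x y (-r1) 1) (r1*(r1-r2)) 0 0 0 0 0 0 (-r2*(r1-r2))"
      by (rule frame_change_arith[OF sa fr]) (use r1 r2 d in \<open>simp_all add: algebra_simps\<close>)
    from scale_CC[OF sa this] show ?thesis using r1 r2 d unfolding evtype_def by auto
  qed
qed

lemma case_b_full:
  assumes sa: "superalgebra m" and ra: "right_alternative m" and x: "x \<in> even_part"
    and dx: "det2 x (m x x) \<noteq> 0"
  shows "\<exists>E1 E2. evtype m E1 E2"
proof -
  define y where "y = m x x"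
  have y: "y \<in> even_part" unfolding y_def using sa_grade(1)[OF sa x x] .
  have d: "det2 x y \<noteq> 0" using dx y_def by simp
  obtain k1 k2 k3 k4 k5 k6 k7 k8 where fr0: "frame m x y k1 k2 k3 k4 k5 k6 k7 k8"
    using frame_exists[OF sa x y d] by blast
  have "lc x y k1 k2 = lc x y 0 1" using fr0 unfolding frame_def y_def by (simp add: lc_def)
  then have k12: "k1 = 0" "k2 = 1" using lc_eq_iff[OF d] by auto
  have fr1: "frame m x y 0 1 k3 k4 k5 k6 k7 k8" using fr0 k12 by simp
  note cb = case_b[OF sa ra fr1]
  define s where "s = csqrt (k6 * k6 + 4 * k5)"
  define r1 where "r1 = (k6 + s) / 2"
  define r2 where "r2 = (k6 - s) / 2"
  have ss: "s * s = k6 * k6 + 4 * k5" unfolding s_def using power2_csqrt[of "k6 * k6 + 4 * k5"]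
    by (simp add: power2_eq_square)
  have k5: "k5 = - r1 * r2" unfolding r1_def r2_def using ss by (simp add: field_simps)
  have k6: "k6 = r1 + r2" unfolding r1_def r2_def by (simp add: field_simps)
  have fr: "frame m x y 0 1 (-r1*r2) (r1+r2) (-r1*r2) (r1+r2) ((-r1*r2)*(r1+r2)) (-r1*r2 + (r1+r2)*(r1+r2))"
    using fr1 cb k5 k6 by simp
  show ?thesis
  proof (cases "r1 = 0")
    case False then show ?thesis using case_b_roots[OF sa fr] by blast
  next
    case r1: True
    show ?thesis
    proof (cases "r2 = 0")
      case False
      have fr': "frame m x y 0 1 (-r2*r1) (r2+r1) (-r2*r1) (r2+r1) ((-r2*r1)*(r2+r1)) (-r2*r1 + (r2+r1)*(r2+r1))"
        using fr by (simp add: ac_simps)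
      then show ?thesis using case_b_roots[OF sa fr' False] by blast
    next
      case True
      have "frame m x y 0 1 0 0 0 0 0 0" using fr r1 True by simp
      then show ?thesis unfolding evtype_def by blast
    qed
  qed
qed

lemma idem_RK:
  assumes sa: "superalgebra m" and ra: "right_alternative m" and fr: "frame m e n 1 0 a b 0 0 c d"
  shows "\<exists>E1 E2. evtype m E1 E2"
proof -
  note dt = frame_det[OF fr]
  have h1: "a = a * b \<and> b = b * b"
    using ra_lc[OF sa ra fr, of 1 0 1 0 0 1] unfolding assoc_def
    by (simp add: prod_frame[OF sa fr] lc_diff lc_neg lc_eq_iff[OF dt] algebra_simps)
  have h2: "c = b * c \<and> b * d = 0"
    using ra_lc[OF sa ra fr, of 0 1 1 0 0 1] unfolding assoc_def
    by (simp add: prod_frame[OF sa fr] lc_diff lc_neg lc_eq_iff[OF dt] algebra_simps)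
  have h3: "c * a = 0 \<and> c * b = 0"
    using ra_sq[OF sa ra fr, of 0 1 0 1]
    by (simp add: prod_frame[OF sa fr] lc_eq_iff[OF dt] algebra_simps)
  have h4: "a * b = 0"
    using ra_sq[OF sa ra fr, of 1 0 0 1]
    by (simp add: prod_frame[OF sa fr] lc_eq_iff[OF dt] algebra_simps)
  have a0: "a = 0" using h1 h4 by simp
  have c0: "c = 0" using h2 h3 by auto
  have b01: "b = 0 \<or> b = 1" using h1 by (metis mult_cancel_left1 mult_eq_0_iff) 
  show ?thesis
  proof (cases "b = 1")
    case True
    then have "d = 0" using h2 by simp
    then have "frame m e n 1 0 0 1 0 0 0 0" using fr a0 c0 True by simp
    then show ?thesis unfolding evtype_def by blast
  next
    case False
    then have b0: "b = 0" using b01 by simp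
    show ?thesis
    proof (cases "d = 0")
      case True
      then have "frame m e n 1 0 0 0 0 0 0 0" using fr a0 b0 c0 by simp
      then show ?thesis unfolding evtype_def by blast
    next
      case False
      have "frame m e n 1 0 0 0 0 0 0 d" using fr a0 b0 c0 by simp
      from scale_CC[OF sa this _ False] show ?thesis unfolding evtype_def by auto
    qed
  qed
qed

lemma lc_eq0:
  assumes "det2 x y \<noteq> 0"
  shows "lc x y a b = 0 \<longleftrightarrow> a = 0 \<and> b = 0"
  using lc_eq_iff[OF assms, of a b 0 0] by (simp add: lc_def)

lemma idem_RU:
  assumes sa: "superalgebra m" and ra: "right_alternative m" and fr: "frame m e n 1 0 a b 0 1 c d"
    and hA: "\<forall>x\<in>even_part. det2 x (m x x) = 0"
  shows "\<exists>E1 E2. evtype m E1 E2"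
proof -
  note dt = frame_det[OF fr]
  have ev: "lc e n p q \<in> even_part" for p q using lc_even frame_even[OF fr] by blast
  have h1: "a * b = 0 \<and> b = b * b"
    using ra_lc[OF sa ra fr, of 1 0 1 0 0 1] unfolding assoc_def
    by (simp add: prod_frame[OF sa fr] lc_diff lc_neg lc_eq_iff[OF dt] lc_eq0[OF dt] algebra_simps)
  have h2: "c = b * c \<and> d = a + b * d"
    using ra_lc[OF sa ra fr, of 0 1 1 0 0 1] unfolding assoc_def
    by (simp add: prod_frame[OF sa fr] lc_diff lc_neg lc_eq_iff[OF dt] lc_eq0[OF dt] algebra_simps)
  have b01: "b = 0 \<or> b = 1" using h1 by (metis mult_cancel_left1)
  show ?thesis
  proof (cases "b = 1")
    case True
    then have a0: "a = 0" using h1 by simp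
    have "det2 (lc e n 0 1) (m (lc e n 0 1) (lc e n 0 1)) = 0" using hA ev by blast
    then have c0: "c = 0" using dt by (simp add: prod_frame[OF sa fr] det2_lc a0 True)
    have "det2 (lc e n 1 1) (m (lc e n 1 1) (lc e n 1 1)) = 0" using hA ev by blast
    then have "(1 + d) * det2 e n = 0" using dt by (simp add: prod_frame[OF sa fr] det2_lc a0 True c0)
    then have d1: "d = -1" using dt by (simp add: add_eq_0_iff)
    have "det2 (lc e n 1 2) (m (lc e n 1 2) (lc e n 1 2)) = 0" using hA ev by blast
    then have False using dt by (simp add: prod_frame[OF sa fr] det2_lc a0 True c0 d1)
    then show ?thesis ..
  next
    case False
    then have b0: "b = 0" using b01 by simp
    then have "c = 0" "d = a" using h2 by auto
    then have fr': "frame m e n 1 0 a 0 0 1 0 a" using fr b0 by simp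
    have "frame m (lc e n 1 0) (lc e n (-a) 1) 1 0 0 0 0 1 0 0"
      by (rule frame_change_arith[OF sa fr']) (simp_all add: algebra_simps)
    then show ?thesis unfolding evtype_def by blast
  qed
qed

lemma exists_indep:
  assumes e: "e \<in> even_part" "e \<noteq> 0"
  shows "\<exists>w\<in>even_part. det2 e w \<noteq> 0"
proof (cases "e$2 = 0")
  case True
  then have "e$1 \<noteq> 0" using e unfolding even_part_def by (auto simp: vec_eq_iff forall_3)
  then show ?thesis by (intro bexI[of _ "axis 2 1"]) (auto simp: det2_def even_part_def axis_def)
next
  case False
  then show ?thesis by (intro bexI[of _ "axis 1 1"]) (auto simp: det2_def even_part_def axis_def)
qed

lemma idem:
  assumes sa: "superalgebra m" and ra: "right_alternative m"
    and hA: "\<forall>x\<in>even_part. det2 x (m x x) = 0"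
    and e: "e \<in> even_part" "e \<noteq> 0" "m e e = e"
  shows "\<exists>E1 E2. evtype m E1 E2"
proof -
  obtain w where w: "w \<in> even_part" "det2 e w \<noteq> 0" using exists_indep[OF e(1,2)] by blast
  obtain k1 k2 k3 k4 k5 k6 k7 k8 where fr0: "frame m e w k1 k2 k3 k4 k5 k6 k7 k8"
    using frame_exists[OF sa e(1) w(1) w(2)] by blast
  have "lc e w k1 k2 = lc e w 1 0" using fr0 e(3) unfolding frame_def by (simp add: lc_def)
  then have k12: "k1 = 1" "k2 = 0" using lc_eq_iff[OF w(2)] by auto
  have fr: "frame m e w 1 0 k3 k4 k5 k6 k7 k8" using fr0 k12 by simp
  have h: "k6 * k5 = 0 \<and> k6 * k6 = k6"
    using ra_sq[OF sa ra fr, of 0 1 1 0]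
    by (simp add: prod_frame[OF sa fr] lc_eq_iff[OF w(2)] algebra_simps)
  show ?thesis
  proof (cases "k6 = 0")
    case False
    then have "k6 = 1" "k5 = 0" using h by (auto simp: mult_cancel_left1)
    then have "frame m e w 1 0 k3 k4 0 1 k7 k8" using fr by simp
    then show ?thesis using idem_RU[OF sa ra _ hA] by blast
  next
    case True
    have dd: "det2 (lc e w 1 0) (lc e w (-k5) 1) \<noteq> 0" using w(2) by (simp add: det2_lc)
    obtain l1 l2 l3 l4 l5 l6 l7 l8 where fr2: "frame m (lc e w 1 0) (lc e w (-k5) 1) l1 l2 l3 l4 l5 l6 l7 l8"
      using frame_exists[OF sa lc_even[OF e(1) w(1)] lc_even[OF e(1) w(1)] dd] by blast
    have "l1 = 1 \<and> l2 = 0 \<and> l5 = 0 \<and> l6 = 0"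
      using frame_rel[OF sa fr fr2] True by auto
    then have "frame m (lc e w 1 0) (lc e w (-k5) 1) 1 0 l3 l4 0 0 l7 l8" using fr2 by simp
    then show ?thesis using idem_RK[OF sa ra] by blast
  qed
qed

lemma case_a2:
  assumes sa: "superalgebra m" and ra: "right_alternative m"
    and h0: "\<forall>x\<in>even_part. m x x = 0"
  shows "\<exists>E1 E2. evtype m E1 E2"
proof -
  have b: "axis 1 1 \<in> even_part" "axis 2 1 \<in> even_part" "det2 (axis 1 1) (axis 2 1) \<noteq> 0"
    by (auto simp: even_part_def det2_def axis_def)
  obtain k1 k2 k3 k4 k5 k6 k7 k8 where fr0: "frame m (axis 1 1) (axis 2 1) k1 k2 k3 k4 k5 k6 k7 k8"
    using frame_exists[OF sa b] by blast
  note dt = b(3)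
  have ev: "lc (axis 1 1) (axis 2 1) p q \<in> even_part" for p q using lc_even b by blast
  have "k1 = 0 \<and> k2 = 0 \<and> k7 = 0 \<and> k8 = 0"
    using fr0 h0 b unfolding frame_def by (auto simp: lc_eq0[OF dt])
  then have fr: "frame m (axis 1 1) (axis 2 1) 0 0 k3 k4 k5 k6 0 0" using fr0 by simp
  have "m (lc (axis 1 1) (axis 2 1) 1 1) (lc (axis 1 1) (axis 2 1) 1 1) = 0" using h0 ev[of 1 1] by blast
  then have s: "k3 + k5 = 0 \<and> k4 + k6 = 0"
    by (simp add: prod_frame[OF sa fr] lc_eq0[OF dt])
  have r1: "k3 * k3 = 0 \<and> k3 * k4 = 0"
    using ra_sq[OF sa ra fr, of 1 0 0 1] by (simp add: prod_frame[OF sa fr] lc_eq_iff[OF dt])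
  have r2: "k6 * k5 = 0 \<and> k6 * k6 = 0"
    using ra_sq[OF sa ra fr, of 0 1 1 0] by (simp add: prod_frame[OF sa fr] lc_eq_iff[OF dt])
  have "k3 = 0" "k6 = 0" using r1 r2 by auto
  then have "k4 = 0" "k5 = 0" using s by auto
  then have "frame m (axis 1 1) (axis 2 1) 0 0 0 0 0 0 0 0" using fr \<open>k3 = 0\<close> \<open>k6 = 0\<close> by simp
  then show ?thesis unfolding evtype_def by blast
qed

lemma par:
  assumes x: "x \<in> even_part" "x \<noteq> 0" and z: "z \<in> even_part" and d: "det2 x z = 0"
  shows "\<exists>c. z = c *s x"
proof (cases "x$1 = 0")
  case True
  then have x2: "x$2 \<noteq> 0" using x unfolding even_part_def by (auto simp: vec_eq_iff forall_3)
  have "z$1 = 0" using d True x2 unfolding det2_def by simp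
  then show ?thesis using x2 x z True unfolding even_part_def
    by (intro exI[of _ "z$2 / x$2"]) (auto simp: vec_eq_iff forall_3)
next
  case False
  have "z$2 = z$1 / x$1 * x$2" using d False unfolding det2_def by (simp add: field_simps)
  then show ?thesis using False x z unfolding even_part_def
    by (intro exI[of _ "z$1 / x$1"]) (auto simp: vec_eq_iff forall_3)
qed

lemma even_class:
  assumes sa: "superalgebra m" and ra: "right_alternative m"
  shows "\<exists>E1 E2. evtype m E1 E2"
proof (cases "\<exists>x\<in>even_part. det2 x (m x x) \<noteq> 0")
  case True
  then show ?thesis using case_b_full[OF sa ra] by blast
next
  case False
  then have hA: "\<forall>x\<in>even_part. det2 x (m x x) = 0" by blast
  show ?thesis
  proof (cases "\<exists>x\<in>even_part. x \<noteq> 0 \<and> (\<exists>c. c \<noteq> 0 \<and> m x x = c *s x)")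
    case True
    then obtain x c where x: "x \<in> even_part" "x \<noteq> 0" "c \<noteq> 0" "m x x = c *s x" by blast
    define e where "e = (1/c) *s x"
    have e1: "e \<in> even_part" unfolding e_def using even_smult[OF x(1)] .
    have e2: "e \<noteq> 0" unfolding e_def using x(2,3) by (auto simp: vec_eq_iff)
    have e3: "m e e = e" unfolding e_def using x(3,4) by (simp add: sa_bil[OF sa] vec_eq_iff)
    show ?thesis using idem[OF sa ra hA e1 e2 e3] .
  next
    case False
    have "\<forall>x\<in>even_part. m x x = 0"
    proof
      fix x assume x: "x \<in> even_part"
      show "m x x = 0"
      proof (cases "x = 0")
        case True then show ?thesis using sa_zero[OF sa] by simp
      next
        case nz: False
        obtain c where c: "m x x = c *s x"
          using par[OF x nz sa_grade(1)[OF sa x x]] hA x by blast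
        then have "c = 0" using False x nz by blast
        then show ?thesis using c by simp
      qed
    qed
    then show ?thesis using case_a2[OF sa ra] by blast
  qed
qed

lemma prods:
  assumes sa: "superalgebra m" and fr: "frame m X Y k1 k2 k3 k4 k5 k6 k7 k8"
    and h: "lam m X = a1" "lam m Y = a2" "rho m X = c1" "rho m Y = c2" "m f0 f0 = lc X Y wa wb"
  shows "m X X = lc X Y k1 k2" "m X Y = lc X Y k3 k4" "m Y X = lc X Y k5 k6" "m Y Y = lc X Y k7 k8"
    "m X (t *s f0) = a1 *s (t *s f0)" "m Y (t *s f0) = a2 *s (t *s f0)"
    "m (t *s f0) X = c1 *s (t *s f0)" "m (t *s f0) Y = c2 *s (t *s f0)"
    "m (t *s f0) (t *s f0) = lc X Y (t * t * wa) (t * t * wb)"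
proof -
  have ev: "X \<in> even_part" "Y \<in> even_part" using frame_even[OF fr] by auto
  show "m X X = lc X Y k1 k2" "m X Y = lc X Y k3 k4" "m Y X = lc X Y k5 k6" "m Y Y = lc X Y k7 k8"
    using fr unfolding frame_def by auto
  show "m X (t *s f0) = a1 *s (t *s f0)" "m Y (t *s f0) = a2 *s (t *s f0)"
    using m_e_f0[OF sa ev(1)] m_e_f0[OF sa ev(2)] h by (simp_all add: sa_bil[OF sa] vector_smult_assoc mult.commute)
  show "m (t *s f0) X = c1 *s (t *s f0)" "m (t *s f0) Y = c2 *s (t *s f0)"
    using m_f0_e[OF sa ev(1)] m_f0_e[OF sa ev(2)] h by (simp_all add: sa_bil[OF sa] vector_smult_assoc mult.commute)
  show "m (t *s f0) (t *s f0) = lc X Y (t * t * wa) (t * t * wb)"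
    using h(5) by (simp add: sa_bil[OF sa] lc_smult mult.assoc)
qed

lemma finish:
  assumes sa: "superalgebra m" and fr: "frame m X Y k1 k2 k3 k4 k5 k6 k7 k8" and t: "t \<noteq> 0"
    and tab: "table_ok m T X Y (t *s f0)"
  shows "super_iso m (mult_of T)"
proof (rule iso_basis[OF sa _ _ _ _ _ tab])
  show "X \<in> even_part" "Y \<in> even_part" using frame_even[OF fr] by auto
  show "det2 X Y \<noteq> 0" using frame_det[OF fr] .
  show "t *s f0 \<in> odd_part" using f0_odd unfolding odd_part_def by simp
  show "(t *s f0) $ 3 \<noteq> 0" using t by (simp add: f0_3)
qed

lemma fin_R01:
  assumes sa: "superalgebra m" and fr: "frame m X Y 1 0 0 0 0 0 0 1" and t: "t \<noteq> 0"
    and h: "lam m X = 0" "lam m Y = 0" "rho m X = 0" "rho m Y = 0" "m f0 f0 = lc X Y wa wb"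
    and w: "t * t * wa = 0" "t * t * wb = 0"
  shows "\<exists>T\<in>set R_list. super_iso m (mult_of T)"
proof -
  have ff: "m (t *s f0) (t *s f0) = lc X Y 0 0" using prods(9)[OF sa fr h, of t, unfolded w] .
  have "table_ok m R01 X Y (t *s f0)"
    using prods(1-8)[OF sa fr h] ff unfolding table_ok_def forall_3 Bv_def R01_def by (simp add: lc_def)
  then show ?thesis using finish[OF sa fr t] by (auto simp: R_list_def)
qed

lemma fin_R02:
  assumes sa: "superalgebra m" and fr: "frame m X Y 1 0 0 0 0 0 0 1" and t: "t \<noteq> 0"
    and h: "lam m X = 1" "lam m Y = 0" "rho m X = 1" "rho m Y = 0" "m f0 f0 = lc X Y wa wb"
    and w: "t * t * wa = 0" "t * t * wb = 0"
  shows "\<exists>T\<in>set R_list. super_iso m (mult_of T)"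
proof -
  have ff: "m (t *s f0) (t *s f0) = lc X Y 0 0" using prods(9)[OF sa fr h, of t, unfolded w] .
  have "table_ok m R02 X Y (t *s f0)"
    using prods(1-8)[OF sa fr h] ff unfolding table_ok_def forall_3 Bv_def R02_def by (simp add: lc_def)
  then show ?thesis using finish[OF sa fr t] by (auto simp: R_list_def)
qed

lemma fin_R03:
  assumes sa: "superalgebra m" and fr: "frame m X Y 1 0 0 0 0 0 0 1" and t: "t \<noteq> 0"
    and h: "lam m X = 1" "lam m Y = 0" "rho m X = 1" "rho m Y = 0" "m f0 f0 = lc X Y wa wb"
    and w: "t * t * wa = 1" "t * t * wb = 0"
  shows "\<exists>T\<in>set R_list. super_iso m (mult_of T)"
proof -
  have ff: "m (t *s f0) (t *s f0) = lc X Y 1 0" using prods(9)[OF sa fr h, of t, unfolded w] .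
  have "table_ok m R03 X Y (t *s f0)"
    using prods(1-8)[OF sa fr h] ff unfolding table_ok_def forall_3 Bv_def R03_def by (simp add: lc_def)
  then show ?thesis using finish[OF sa fr t] by (auto simp: R_list_def)
qed

lemma fin_R04:
  assumes sa: "superalgebra m" and fr: "frame m X Y 1 0 0 0 0 0 0 1" and t: "t \<noteq> 0"
    and h: "lam m X = 0" "lam m Y = 0" "rho m X = 1" "rho m Y = 0" "m f0 f0 = lc X Y wa wb"
    and w: "t * t * wa = 0" "t * t * wb = 0"
  shows "\<exists>T\<in>set R_list. super_iso m (mult_of T)"
proof -
  have ff: "m (t *s f0) (t *s f0) = lc X Y 0 0" using prods(9)[OF sa fr h, of t, unfolded w] .
  have "table_ok m R04 X Y (t *s f0)"
    using prods(1-8)[OF sa fr h] ff unfolding table_ok_def forall_3 Bv_def R04_def by (simp add: lc_def)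
  then show ?thesis using finish[OF sa fr t] by (auto simp: R_list_def)
qed

lemma fin_R05:
  assumes sa: "superalgebra m" and fr: "frame m X Y 1 0 0 0 0 0 0 1" and t: "t \<noteq> 0"
    and h: "lam m X = 1" "lam m Y = 0" "rho m X = 0" "rho m Y = 0" "m f0 f0 = lc X Y wa wb"
    and w: "t * t * wa = 0" "t * t * wb = 0"
  shows "\<exists>T\<in>set R_list. super_iso m (mult_of T)"
proof -
  have ff: "m (t *s f0) (t *s f0) = lc X Y 0 0" using prods(9)[OF sa fr h, of t, unfolded w] .
  have "table_ok m R05 X Y (t *s f0)"
    using prods(1-8)[OF sa fr h] ff unfolding table_ok_def forall_3 Bv_def R05_def by (simp add: lc_def)
  then show ?thesis using finish[OF sa fr t] by (auto simp: R_list_def)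
qed

lemma fin_R06:
  assumes sa: "superalgebra m" and fr: "frame m X Y 1 0 0 0 0 0 0 1" and t: "t \<noteq> 0"
    and h: "lam m X = 1" "lam m Y = 0" "rho m X = 0" "rho m Y = 0" "m f0 f0 = lc X Y wa wb"
    and w: "t * t * wa = 1" "t * t * wb = 0"
  shows "\<exists>T\<in>set R_list. super_iso m (mult_of T)"
proof -
  have ff: "m (t *s f0) (t *s f0) = lc X Y 1 0" using prods(9)[OF sa fr h, of t, unfolded w] .
  have "table_ok m R06 X Y (t *s f0)"
    using prods(1-8)[OF sa fr h] ff unfolding table_ok_def forall_3 Bv_def R06_def by (simp add: lc_def)
  then show ?thesis using finish[OF sa fr t] by (auto simp: R_list_def)
qed

lemma fin_R07:
  assumes sa: "superalgebra m" and fr: "frame m X Y 1 0 0 0 0 0 0 1" and t: "t \<noteq> 0"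
    and h: "lam m X = 0" "lam m Y = 1" "rho m X = 1" "rho m Y = 0" "m f0 f0 = lc X Y wa wb"
    and w: "t * t * wa = 0" "t * t * wb = 0"
  shows "\<exists>T\<in>set R_list. super_iso m (mult_of T)"
proof -
  have ff: "m (t *s f0) (t *s f0) = lc X Y 0 0" using prods(9)[OF sa fr h, of t, unfolded w] .
  have "table_ok m R07 X Y (t *s f0)"
    using prods(1-8)[OF sa fr h] ff unfolding table_ok_def forall_3 Bv_def R07_def by (simp add: lc_def)
  then show ?thesis using finish[OF sa fr t] by (auto simp: R_list_def)
qed

lemma fin_R08:
  assumes sa: "superalgebra m" and fr: "frame m X Y 1 0 0 0 0 0 0 1" and t: "t \<noteq> 0"
    and h: "lam m X = 0" "lam m Y = 1" "rho m X = 1" "rho m Y = 0" "m f0 f0 = lc X Y wa wb"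
    and w: "t * t * wa = 0" "t * t * wb = 1"
  shows "\<exists>T\<in>set R_list. super_iso m (mult_of T)"
proof -
  have ff: "m (t *s f0) (t *s f0) = lc X Y 0 1" using prods(9)[OF sa fr h, of t, unfolded w] .
  have "table_ok m R08 X Y (t *s f0)"
    using prods(1-8)[OF sa fr h] ff unfolding table_ok_def forall_3 Bv_def R08_def by (simp add: lc_def)
  then show ?thesis using finish[OF sa fr t] by (auto simp: R_list_def)
qed

lemma fin_R09:
  assumes sa: "superalgebra m" and fr: "frame m X Y 1 0 0 0 0 0 0 0" and t: "t \<noteq> 0"
    and h: "lam m X = 0" "lam m Y = 0" "rho m X = 0" "rho m Y = 0" "m f0 f0 = lc X Y wa wb"
    and w: "t * t * wa = 0" "t * t * wb = 0"
  shows "\<exists>T\<in>set R_list. super_iso m (mult_of T)"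
proof -
  have ff: "m (t *s f0) (t *s f0) = lc X Y 0 0" using prods(9)[OF sa fr h, of t, unfolded w] .
  have "table_ok m R09 X Y (t *s f0)"
    using prods(1-8)[OF sa fr h] ff unfolding table_ok_def forall_3 Bv_def R09_def by (simp add: lc_def)
  then show ?thesis using finish[OF sa fr t] by (auto simp: R_list_def)
qed

lemma fin_R10:
  assumes sa: "superalgebra m" and fr: "frame m X Y 1 0 0 0 0 0 0 0" and t: "t \<noteq> 0"
    and h: "lam m X = 0" "lam m Y = 0" "rho m X = 0" "rho m Y = 0" "m f0 f0 = lc X Y wa wb"
    and w: "t * t * wa = 0" "t * t * wb = 1"
  shows "\<exists>T\<in>set R_list. super_iso m (mult_of T)"
proof -
  have ff: "m (t *s f0) (t *s f0) = lc X Y 0 1" using prods(9)[OF sa fr h, of t, unfolded w] .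
  have "table_ok m R10 X Y (t *s f0)"
    using prods(1-8)[OF sa fr h] ff unfolding table_ok_def forall_3 Bv_def R10_def by (simp add: lc_def)
  then show ?thesis using finish[OF sa fr t] by (auto simp: R_list_def)
qed

lemma fin_R11:
  assumes sa: "superalgebra m" and fr: "frame m X Y 1 0 0 0 0 0 0 0" and t: "t \<noteq> 0"
    and h: "lam m X = 0" "lam m Y = 0" "rho m X = 1" "rho m Y = 0" "m f0 f0 = lc X Y wa wb"
    and w: "t * t * wa = 0" "t * t * wb = 0"
  shows "\<exists>T\<in>set R_list. super_iso m (mult_of T)"
proof -
  have ff: "m (t *s f0) (t *s f0) = lc X Y 0 0" using prods(9)[OF sa fr h, of t, unfolded w] .
  have "table_ok m R11 X Y (t *s f0)"
    using prods(1-8)[OF sa fr h] ff unfolding table_ok_def forall_3 Bv_def R11_def by (simp add: lc_def)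
  then show ?thesis using finish[OF sa fr t] by (auto simp: R_list_def)
qed

lemma fin_R12:
  assumes sa: "superalgebra m" and fr: "frame m X Y 1 0 0 0 0 0 0 0" and t: "t \<noteq> 0"
    and h: "lam m X = 0" "lam m Y = 0" "rho m X = 1" "rho m Y = 0" "m f0 f0 = lc X Y wa wb"
    and w: "t * t * wa = 0" "t * t * wb = 1"
  shows "\<exists>T\<in>set R_list. super_iso m (mult_of T)"
proof -
  have ff: "m (t *s f0) (t *s f0) = lc X Y 0 1" using prods(9)[OF sa fr h, of t, unfolded w] .
  have "table_ok m R12 X Y (t *s f0)"
    using prods(1-8)[OF sa fr h] ff unfolding table_ok_def forall_3 Bv_def R12_def by (simp add: lc_def)
  then show ?thesis using finish[OF sa fr t] by (auto simp: R_list_def)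
qed

lemma fin_R13:
  assumes sa: "superalgebra m" and fr: "frame m X Y 1 0 0 0 0 0 0 0" and t: "t \<noteq> 0"
    and h: "lam m X = 1" "lam m Y = 0" "rho m X = 0" "rho m Y = 0" "m f0 f0 = lc X Y wa wb"
    and w: "t * t * wa = 0" "t * t * wb = 0"
  shows "\<exists>T\<in>set R_list. super_iso m (mult_of T)"
proof -
  have ff: "m (t *s f0) (t *s f0) = lc X Y 0 0" using prods(9)[OF sa fr h, of t, unfolded w] .
  have "table_ok m R13 X Y (t *s f0)"
    using prods(1-8)[OF sa fr h] ff unfolding table_ok_def forall_3 Bv_def R13_def by (simp add: lc_def)
  then show ?thesis using finish[OF sa fr t] by (auto simp: R_list_def)
qed

lemma fin_R14:
  assumes sa: "superalgebra m" and fr: "frame m X Y 1 0 0 0 0 0 0 0" and t: "t \<noteq> 0"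
    and h: "lam m X = 1" "lam m Y = 0" "rho m X = 0" "rho m Y = 0" "m f0 f0 = lc X Y wa wb"
    and w: "t * t * wa = 1" "t * t * wb = 0"
  shows "\<exists>T\<in>set R_list. super_iso m (mult_of T)"
proof -
  have ff: "m (t *s f0) (t *s f0) = lc X Y 1 0" using prods(9)[OF sa fr h, of t, unfolded w] .
  have "table_ok m R14 X Y (t *s f0)"
    using prods(1-8)[OF sa fr h] ff unfolding table_ok_def forall_3 Bv_def R14_def by (simp add: lc_def)
  then show ?thesis using finish[OF sa fr t] by (auto simp: R_list_def)
qed

lemma fin_R15:
  assumes sa: "superalgebra m" and fr: "frame m X Y 1 0 0 0 0 0 0 0" and t: "t \<noteq> 0"
    and h: "lam m X = 1" "lam m Y = 0" "rho m X = 1" "rho m Y = 0" "m f0 f0 = lc X Y wa wb"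
    and w: "t * t * wa = 0" "t * t * wb = 0"
  shows "\<exists>T\<in>set R_list. super_iso m (mult_of T)"
proof -
  have ff: "m (t *s f0) (t *s f0) = lc X Y 0 0" using prods(9)[OF sa fr h, of t, unfolded w] .
  have "table_ok m R15 X Y (t *s f0)"
    using prods(1-8)[OF sa fr h] ff unfolding table_ok_def forall_3 Bv_def R15_def by (simp add: lc_def)
  then show ?thesis using finish[OF sa fr t] by (auto simp: R_list_def)
qed

lemma fin_R16:
  assumes sa: "superalgebra m" and fr: "frame m X Y 1 0 0 0 0 0 0 0" and t: "t \<noteq> 0"
    and h: "lam m X = 1" "lam m Y = 0" "rho m X = 1" "rho m Y = 0" "m f0 f0 = lc X Y wa wb"
    and w: "t * t * wa = 1" "t * t * wb = 0"
  shows "\<exists>T\<in>set R_list. super_iso m (mult_of T)"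
proof -
  have ff: "m (t *s f0) (t *s f0) = lc X Y 1 0" using prods(9)[OF sa fr h, of t, unfolded w] .
  have "table_ok m R16 X Y (t *s f0)"
    using prods(1-8)[OF sa fr h] ff unfolding table_ok_def forall_3 Bv_def R16_def by (simp add: lc_def)
  then show ?thesis using finish[OF sa fr t] by (auto simp: R_list_def)
qed

lemma fin_R17:
  assumes sa: "superalgebra m" and fr: "frame m X Y 1 0 0 1 0 1 0 0" and t: "t \<noteq> 0"
    and h: "lam m X = 0" "lam m Y = 0" "rho m X = 0" "rho m Y = 0" "m f0 f0 = lc X Y wa wb"
    and w: "t * t * wa = 0" "t * t * wb = 0"
  shows "\<exists>T\<in>set R_list. super_iso m (mult_of T)"
proof -
  have ff: "m (t *s f0) (t *s f0) = lc X Y 0 0" using prods(9)[OF sa fr h, of t, unfolded w] .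
  have "table_ok m R17 X Y (t *s f0)"
    using prods(1-8)[OF sa fr h] ff unfolding table_ok_def forall_3 Bv_def R17_def by (simp add: lc_def)
  then show ?thesis using finish[OF sa fr t] by (auto simp: R_list_def)
qed

lemma fin_R18:
  assumes sa: "superalgebra m" and fr: "frame m X Y 1 0 0 1 0 1 0 0" and t: "t \<noteq> 0"
    and h: "lam m X = 1" "lam m Y = 0" "rho m X = 0" "rho m Y = 0" "m f0 f0 = lc X Y wa wb"
    and w: "t * t * wa = 0" "t * t * wb = 0"
  shows "\<exists>T\<in>set R_list. super_iso m (mult_of T)"
proof -
  have ff: "m (t *s f0) (t *s f0) = lc X Y 0 0" using prods(9)[OF sa fr h, of t, unfolded w] .
  have "table_ok m R18 X Y (t *s f0)"
    using prods(1-8)[OF sa fr h] ff unfolding table_ok_def forall_3 Bv_def R18_def by (simp add: lc_def)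
  then show ?thesis using finish[OF sa fr t] by (auto simp: R_list_def)
qed

lemma fin_R19:
  assumes sa: "superalgebra m" and fr: "frame m X Y 1 0 0 1 0 1 0 0" and t: "t \<noteq> 0"
    and h: "lam m X = 1" "lam m Y = 0" "rho m X = 0" "rho m Y = 0" "m f0 f0 = lc X Y wa wb"
    and w: "t * t * wa = 0" "t * t * wb = 1"
  shows "\<exists>T\<in>set R_list. super_iso m (mult_of T)"
proof -
  have ff: "m (t *s f0) (t *s f0) = lc X Y 0 1" using prods(9)[OF sa fr h, of t, unfolded w] .
  have "table_ok m R19 X Y (t *s f0)"
    using prods(1-8)[OF sa fr h] ff unfolding table_ok_def forall_3 Bv_def R19_def by (simp add: lc_def)
  then show ?thesis using finish[OF sa fr t] by (auto simp: R_list_def)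
qed

lemma fin_R20:
  assumes sa: "superalgebra m" and fr: "frame m X Y 1 0 0 1 0 1 0 0" and t: "t \<noteq> 0"
    and h: "lam m X = 0" "lam m Y = 0" "rho m X = 1" "rho m Y = 0" "m f0 f0 = lc X Y wa wb"
    and w: "t * t * wa = 0" "t * t * wb = 0"
  shows "\<exists>T\<in>set R_list. super_iso m (mult_of T)"
proof -
  have ff: "m (t *s f0) (t *s f0) = lc X Y 0 0" using prods(9)[OF sa fr h, of t, unfolded w] .
  have "table_ok m R20 X Y (t *s f0)"
    using prods(1-8)[OF sa fr h] ff unfolding table_ok_def forall_3 Bv_def R20_def by (simp add: lc_def)
  then show ?thesis using finish[OF sa fr t] by (auto simp: R_list_def)
qed

lemma fin_R21:
  assumes sa: "superalgebra m" and fr: "frame m X Y 1 0 0 1 0 1 0 0" and t: "t \<noteq> 0"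
    and h: "lam m X = 1" "lam m Y = 0" "rho m X = 1" "rho m Y = 0" "m f0 f0 = lc X Y wa wb"
    and w: "t * t * wa = 0" "t * t * wb = 0"
  shows "\<exists>T\<in>set R_list. super_iso m (mult_of T)"
proof -
  have ff: "m (t *s f0) (t *s f0) = lc X Y 0 0" using prods(9)[OF sa fr h, of t, unfolded w] .
  have "table_ok m R21 X Y (t *s f0)"
    using prods(1-8)[OF sa fr h] ff unfolding table_ok_def forall_3 Bv_def R21_def by (simp add: lc_def)
  then show ?thesis using finish[OF sa fr t] by (auto simp: R_list_def)
qed

lemma fin_R22:
  assumes sa: "superalgebra m" and fr: "frame m X Y 1 0 0 1 0 1 0 0" and t: "t \<noteq> 0"
    and h: "lam m X = 1" "lam m Y = 0" "rho m X = 1" "rho m Y = 0" "m f0 f0 = lc X Y wa wb"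
    and w: "t * t * wa = 0" "t * t * wb = 1"
  shows "\<exists>T\<in>set R_list. super_iso m (mult_of T)"
proof -
  have ff: "m (t *s f0) (t *s f0) = lc X Y 0 1" using prods(9)[OF sa fr h, of t, unfolded w] .
  have "table_ok m R22 X Y (t *s f0)"
    using prods(1-8)[OF sa fr h] ff unfolding table_ok_def forall_3 Bv_def R22_def by (simp add: lc_def)
  then show ?thesis using finish[OF sa fr t] by (auto simp: R_list_def)
qed

lemma fin_R23:
  assumes sa: "superalgebra m" and fr: "frame m X Y 1 0 0 1 0 0 0 0" and t: "t \<noteq> 0"
    and h: "lam m X = 0" "lam m Y = 0" "rho m X = 0" "rho m Y = 0" "m f0 f0 = lc X Y wa wb"
    and w: "t * t * wa = 0" "t * t * wb = 0"
  shows "\<exists>T\<in>set R_list. super_iso m (mult_of T)"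
proof -
  have ff: "m (t *s f0) (t *s f0) = lc X Y 0 0" using prods(9)[OF sa fr h, of t, unfolded w] .
  have "table_ok m R23 X Y (t *s f0)"
    using prods(1-8)[OF sa fr h] ff unfolding table_ok_def forall_3 Bv_def R23_def by (simp add: lc_def)
  then show ?thesis using finish[OF sa fr t] by (auto simp: R_list_def)
qed

lemma fin_R24:
  assumes sa: "superalgebra m" and fr: "frame m X Y 1 0 0 1 0 0 0 0" and t: "t \<noteq> 0"
    and h: "lam m X = 0" "lam m Y = 0" "rho m X = 0" "rho m Y = 0" "m f0 f0 = lc X Y wa wb"
    and w: "t * t * wa = 0" "t * t * wb = 1"
  shows "\<exists>T\<in>set R_list. super_iso m (mult_of T)"
proof -
  have ff: "m (t *s f0) (t *s f0) = lc X Y 0 1" using prods(9)[OF sa fr h, of t, unfolded w] .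
  have "table_ok m R24 X Y (t *s f0)"
    using prods(1-8)[OF sa fr h] ff unfolding table_ok_def forall_3 Bv_def R24_def by (simp add: lc_def)
  then show ?thesis using finish[OF sa fr t] by (auto simp: R_list_def)
qed

lemma fin_R25:
  assumes sa: "superalgebra m" and fr: "frame m X Y 1 0 0 0 0 1 0 0" and t: "t \<noteq> 0"
    and h: "lam m X = 0" "lam m Y = 0" "rho m X = 0" "rho m Y = 0" "m f0 f0 = lc X Y wa wb"
    and w: "t * t * wa = 0" "t * t * wb = 0"
  shows "\<exists>T\<in>set R_list. super_iso m (mult_of T)"
proof -
  have ff: "m (t *s f0) (t *s f0) = lc X Y 0 0" using prods(9)[OF sa fr h, of t, unfolded w] .
  have "table_ok m R25 X Y (t *s f0)"
    using prods(1-8)[OF sa fr h] ff unfolding table_ok_def forall_3 Bv_def R25_def by (simp add: lc_def)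
  then show ?thesis using finish[OF sa fr t] by (auto simp: R_list_def)
qed

lemma fin_R26:
  assumes sa: "superalgebra m" and fr: "frame m X Y 1 0 0 0 0 1 0 0" and t: "t \<noteq> 0"
    and h: "lam m X = 1" "lam m Y = 0" "rho m X = 0" "rho m Y = 0" "m f0 f0 = lc X Y wa wb"
    and w: "t * t * wa = 0" "t * t * wb = 0"
  shows "\<exists>T\<in>set R_list. super_iso m (mult_of T)"
proof -
  have ff: "m (t *s f0) (t *s f0) = lc X Y 0 0" using prods(9)[OF sa fr h, of t, unfolded w] .
  have "table_ok m R26 X Y (t *s f0)"
    using prods(1-8)[OF sa fr h] ff unfolding table_ok_def forall_3 Bv_def R26_def by (simp add: lc_def)
  then show ?thesis using finish[OF sa fr t] by (auto simp: R_list_def)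
qed

lemma fin_R27:
  assumes sa: "superalgebra m" and fr: "frame m X Y 1 0 0 0 0 1 0 0" and t: "t \<noteq> 0"
    and h: "lam m X = 1" "lam m Y = 0" "rho m X = 0" "rho m Y = 0" "m f0 f0 = lc X Y wa wb"
    and w: "t * t * wa = 1" "t * t * wb = 0"
  shows "\<exists>T\<in>set R_list. super_iso m (mult_of T)"
proof -
  have ff: "m (t *s f0) (t *s f0) = lc X Y 1 0" using prods(9)[OF sa fr h, of t, unfolded w] .
  have "table_ok m R27 X Y (t *s f0)"
    using prods(1-8)[OF sa fr h] ff unfolding table_ok_def forall_3 Bv_def R27_def by (simp add: lc_def)
  then show ?thesis using finish[OF sa fr t] by (auto simp: R_list_def)
qed

lemma fin_R28:
  assumes sa: "superalgebra m" and fr: "frame m X Y 1 0 0 0 0 1 0 0" and t: "t \<noteq> 0"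
    and h: "lam m X = 1" "lam m Y = 0" "rho m X = 0" "rho m Y = 0" "m f0 f0 = lc X Y wa wb"
    and w: "t * t * wa = 0" "t * t * wb = 1"
  shows "\<exists>T\<in>set R_list. super_iso m (mult_of T)"
proof -
  have ff: "m (t *s f0) (t *s f0) = lc X Y 0 1" using prods(9)[OF sa fr h, of t, unfolded w] .
  have "table_ok m R28 X Y (t *s f0)"
    using prods(1-8)[OF sa fr h] ff unfolding table_ok_def forall_3 Bv_def R28_def by (simp add: lc_def)
  then show ?thesis using finish[OF sa fr t] by (auto simp: R_list_def)
qed

lemma fin_R29:
  assumes sa: "superalgebra m" and fr: "frame m X Y 1 0 0 1 0 0 0 0" and t: "t \<noteq> 0"
    and h: "lam m X = 0" "lam m Y = 0" "rho m X = 1" "rho m Y = 0" "m f0 f0 = lc X Y wa wb"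
    and w: "t * t * wa = 0" "t * t * wb = 0"
  shows "\<exists>T\<in>set R_list. super_iso m (mult_of T)"
proof -
  have ff: "m (t *s f0) (t *s f0) = lc X Y 0 0" using prods(9)[OF sa fr h, of t, unfolded w] .
  have "table_ok m R29 X Y (t *s f0)"
    using prods(1-8)[OF sa fr h] ff unfolding table_ok_def forall_3 Bv_def R29_def by (simp add: lc_def)
  then show ?thesis using finish[OF sa fr t] by (auto simp: R_list_def)
qed

lemma fin_R30:
  assumes sa: "superalgebra m" and fr: "frame m X Y 1 0 0 1 0 0 0 0" and t: "t \<noteq> 0"
    and h: "lam m X = 0" "lam m Y = 0" "rho m X = 1" "rho m Y = 0" "m f0 f0 = lc X Y wa wb"
    and w: "t * t * wa = 0" "t * t * wb = 1"
  shows "\<exists>T\<in>set R_list. super_iso m (mult_of T)"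
proof -
  have ff: "m (t *s f0) (t *s f0) = lc X Y 0 1" using prods(9)[OF sa fr h, of t, unfolded w] .
  have "table_ok m R30 X Y (t *s f0)"
    using prods(1-8)[OF sa fr h] ff unfolding table_ok_def forall_3 Bv_def R30_def by (simp add: lc_def)
  then show ?thesis using finish[OF sa fr t] by (auto simp: R_list_def)
qed

lemma fin_R31:
  assumes sa: "superalgebra m" and fr: "frame m X Y 1 0 0 0 0 1 0 0" and t: "t \<noteq> 0"
    and h: "lam m X = 0" "lam m Y = 0" "rho m X = 1" "rho m Y = 0" "m f0 f0 = lc X Y wa wb"
    and w: "t * t * wa = 0" "t * t * wb = 0"
  shows "\<exists>T\<in>set R_list. super_iso m (mult_of T)"
proof -
  have ff: "m (t *s f0) (t *s f0) = lc X Y 0 0" using prods(9)[OF sa fr h, of t, unfolded w] .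
  have "table_ok m R31 X Y (t *s f0)"
    using prods(1-8)[OF sa fr h] ff unfolding table_ok_def forall_3 Bv_def R31_def by (simp add: lc_def)
  then show ?thesis using finish[OF sa fr t] by (auto simp: R_list_def)
qed

lemma fin_R32:
  assumes sa: "superalgebra m" and fr: "frame m X Y 1 0 0 1 0 0 0 0" and t: "t \<noteq> 0"
    and h: "lam m X = 1" "lam m Y = 0" "rho m X = 0" "rho m Y = 0" "m f0 f0 = lc X Y wa wb"
    and w: "t * t * wa = 0" "t * t * wb = 0"
  shows "\<exists>T\<in>set R_list. super_iso m (mult_of T)"
proof -
  have ff: "m (t *s f0) (t *s f0) = lc X Y 0 0" using prods(9)[OF sa fr h, of t, unfolded w] .
  have "table_ok m R32 X Y (t *s f0)"
    using prods(1-8)[OF sa fr h] ff unfolding table_ok_def forall_3 Bv_def R32_def by (simp add: lc_def)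
  then show ?thesis using finish[OF sa fr t] by (auto simp: R_list_def)
qed

lemma fin_R33:
  assumes sa: "superalgebra m" and fr: "frame m X Y 1 0 0 0 0 1 0 0" and t: "t \<noteq> 0"
    and h: "lam m X = 1" "lam m Y = 0" "rho m X = 1" "rho m Y = 0" "m f0 f0 = lc X Y wa wb"
    and w: "t * t * wa = 0" "t * t * wb = 0"
  shows "\<exists>T\<in>set R_list. super_iso m (mult_of T)"
proof -
  have ff: "m (t *s f0) (t *s f0) = lc X Y 0 0" using prods(9)[OF sa fr h, of t, unfolded w] .
  have "table_ok m R33 X Y (t *s f0)"
    using prods(1-8)[OF sa fr h] ff unfolding table_ok_def forall_3 Bv_def R33_def by (simp add: lc_def)
  then show ?thesis using finish[OF sa fr t] by (auto simp: R_list_def)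
qed

lemma fin_R34:
  assumes sa: "superalgebra m" and fr: "frame m X Y 1 0 0 0 0 1 0 0" and t: "t \<noteq> 0"
    and h: "lam m X = 1" "lam m Y = 0" "rho m X = 1" "rho m Y = 0" "m f0 f0 = lc X Y wa wb"
    and w: "t * t * wa = 1" "t * t * wb = 0"
  shows "\<exists>T\<in>set R_list. super_iso m (mult_of T)"
proof -
  have ff: "m (t *s f0) (t *s f0) = lc X Y 1 0" using prods(9)[OF sa fr h, of t, unfolded w] .
  have "table_ok m R34 X Y (t *s f0)"
    using prods(1-8)[OF sa fr h] ff unfolding table_ok_def forall_3 Bv_def R34_def by (simp add: lc_def)
  then show ?thesis using finish[OF sa fr t] by (auto simp: R_list_def)
qed

lemma fin_R35:
  assumes sa: "superalgebra m" and fr: "frame m X Y 1 0 0 0 0 1 0 0" and t: "t \<noteq> 0"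
    and h: "lam m X = 1" "lam m Y = 0" "rho m X = 1" "rho m Y = 0" "m f0 f0 = lc X Y wa wb"
    and w: "t * t * wa = 0" "t * t * wb = 1"
  shows "\<exists>T\<in>set R_list. super_iso m (mult_of T)"
proof -
  have ff: "m (t *s f0) (t *s f0) = lc X Y 0 1" using prods(9)[OF sa fr h, of t, unfolded w] .
  have "table_ok m R35 X Y (t *s f0)"
    using prods(1-8)[OF sa fr h] ff unfolding table_ok_def forall_3 Bv_def R35_def by (simp add: lc_def)
  then show ?thesis using finish[OF sa fr t] by (auto simp: R_list_def)
qed

lemma fin_R36:
  assumes sa: "superalgebra m" and fr: "frame m X Y 1 0 0 1 0 0 0 0" and t: "t \<noteq> 0"
    and h: "lam m X = 1" "lam m Y = 0" "rho m X = 1" "rho m Y = 0" "m f0 f0 = lc X Y wa wb"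
    and w: "t * t * wa = 0" "t * t * wb = 0"
  shows "\<exists>T\<in>set R_list. super_iso m (mult_of T)"
proof -
  have ff: "m (t *s f0) (t *s f0) = lc X Y 0 0" using prods(9)[OF sa fr h, of t, unfolded w] .
  have "table_ok m R36 X Y (t *s f0)"
    using prods(1-8)[OF sa fr h] ff unfolding table_ok_def forall_3 Bv_def R36_def by (simp add: lc_def)
  then show ?thesis using finish[OF sa fr t] by (auto simp: R_list_def)
qed

lemma fin_R37:
  assumes sa: "superalgebra m" and fr: "frame m X Y 0 1 0 0 0 0 0 0" and t: "t \<noteq> 0"
    and h: "lam m X = 0" "lam m Y = 0" "rho m X = 0" "rho m Y = 0" "m f0 f0 = lc X Y wa wb"
    and w: "t * t * wa = 0" "t * t * wb = 0"
  shows "\<exists>T\<in>set R_list. super_iso m (mult_of T)"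
proof -
  have ff: "m (t *s f0) (t *s f0) = lc X Y 0 0" using prods(9)[OF sa fr h, of t, unfolded w] .
  have "table_ok m R37 X Y (t *s f0)"
    using prods(1-8)[OF sa fr h] ff unfolding table_ok_def forall_3 Bv_def R37_def by (simp add: lc_def)
  then show ?thesis using finish[OF sa fr t] by (auto simp: R_list_def)
qed

lemma fin_R38:
  assumes sa: "superalgebra m" and fr: "frame m X Y 0 1 0 0 0 0 0 0" and t: "t \<noteq> 0"
    and h: "lam m X = 0" "lam m Y = 0" "rho m X = 0" "rho m Y = 0" "m f0 f0 = lc X Y wa wb"
    and w: "t * t * wa = 0" "t * t * wb = 1"
  shows "\<exists>T\<in>set R_list. super_iso m (mult_of T)"
proof -
  have ff: "m (t *s f0) (t *s f0) = lc X Y 0 1" using prods(9)[OF sa fr h, of t, unfolded w] .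
  have "table_ok m R38 X Y (t *s f0)"
    using prods(1-8)[OF sa fr h] ff unfolding table_ok_def forall_3 Bv_def R38_def by (simp add: lc_def)
  then show ?thesis using finish[OF sa fr t] by (auto simp: R_list_def)
qed

lemma fin_R39:
  assumes sa: "superalgebra m" and fr: "frame m X Y 0 0 0 0 0 0 0 0" and t: "t \<noteq> 0"
    and h: "lam m X = 0" "lam m Y = 0" "rho m X = 0" "rho m Y = 0" "m f0 f0 = lc X Y wa wb"
    and w: "t * t * wa = 1" "t * t * wb = 0"
  shows "\<exists>T\<in>set R_list. super_iso m (mult_of T)"
proof -
  have ff: "m (t *s f0) (t *s f0) = lc X Y 1 0" using prods(9)[OF sa fr h, of t, unfolded w] .
  have "table_ok m R39 X Y (t *s f0)"
    using prods(1-8)[OF sa fr h] ff unfolding table_ok_def forall_3 Bv_def R39_def by (simp add: lc_def)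
  then show ?thesis using finish[OF sa fr t] by (auto simp: R_list_def)
qed

lemma half: "(a::complex) + a = 2 * b * c \<Longrightarrow> a = b * c"
  by (simp add: field_simps)

lemma odd_constraints:
  assumes sa: "superalgebra m" and ra: "right_alternative m" and fr: "frame m E1 E2 k1 k2 k3 k4 k5 k6 k7 k8"
  shows "\<exists>q1 q2. m f0 f0 = lc E1 E2 q1 q2 \<and>
    k1 * lam m E1 + k2 * lam m E2 = lam m E1 * lam m E1 \<and>
    k3 * lam m E1 + k4 * lam m E2 = lam m E1 * lam m E2 \<and>
    k5 * lam m E1 + k6 * lam m E2 = lam m E2 * lam m E1 \<and>
    k7 * lam m E1 + k8 * lam m E2 = lam m E2 * lam m E2 \<and>
    k1 * rho m E1 + k2 * rho m E2 = rho m E1 * rho m E1 \<and>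
    (k3 * rho m E1 + k4 * rho m E2) + (k5 * rho m E1 + k6 * rho m E2) = 2 * rho m E1 * rho m E2 \<and>
    k7 * rho m E1 + k8 * rho m E2 = rho m E2 * rho m E2 \<and>
    q1 * k1 + q2 * k5 = lam m E1 * q1 \<and> q1 * k2 + q2 * k6 = lam m E1 * q2 \<and>
    q1 * k3 + q2 * k7 = lam m E2 * q1 \<and> q1 * k4 + q2 * k8 = lam m E2 * q2"
proof -
  have ev: "E1 \<in> even_part" "E2 \<in> even_part" using frame_even[OF fr] by auto
  note dt = frame_det[OF fr]
  have pr: "m E1 E1 = lc E1 E2 k1 k2" "m E1 E2 = lc E1 E2 k3 k4" "m E2 E1 = lc E1 E2 k5 k6" "m E2 E2 = lc E1 E2 k7 k8"
    using fr unfolding frame_def by auto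
  have ll: "lam m (lc E1 E2 a b) = a * lam m E1 + b * lam m E2" for a b
    unfolding lc_def using lam_lin[OF sa] .
  have rl: "rho m (lc E1 E2 a b) = a * rho m E1 + b * rho m E2" for a b
    unfolding lc_def using rho_lin[OF sa] .
  have L: "k1 * lam m E1 + k2 * lam m E2 = lam m E1 * lam m E1 \<and>
    k3 * lam m E1 + k4 * lam m E2 = lam m E1 * lam m E2 \<and>
    k5 * lam m E1 + k6 * lam m E2 = lam m E2 * lam m E1 \<and>
    k7 * lam m E1 + k8 * lam m E2 = lam m E2 * lam m E2"
    using lam_mult[OF sa ra ev(1) ev(1)] lam_mult[OF sa ra ev(1) ev(2)]
      lam_mult[OF sa ra ev(2) ev(1)] lam_mult[OF sa ra ev(2) ev(2)]
    unfolding pr ll by simp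
  have R: "k1 * rho m E1 + k2 * rho m E2 = rho m E1 * rho m E1 \<and>
    (k3 * rho m E1 + k4 * rho m E2) + (k5 * rho m E1 + k6 * rho m E2) = 2 * rho m E1 * rho m E2 \<and>
    k7 * rho m E1 + k8 * rho m E2 = rho m E2 * rho m E2"
    using half[OF rho_sym[OF sa ra ev(1) ev(1)]] rho_sym[OF sa ra ev(1) ev(2)] half[OF rho_sym[OF sa ra ev(2) ev(2)]]
    unfolding pr rl by simp
  obtain q1 q2 where u: "m f0 f0 = lc E1 E2 q1 q2"
    using span2[OF ev u_even[OF sa] dt] by blast
  have e1: "E1 = lc E1 E2 1 0" and e2: "E2 = lc E1 E2 0 1" by (simp_all add: lc_def)
  have "m (lc E1 E2 q1 q2) (lc E1 E2 1 0) = lc E1 E2 (lam m E1 * q1) (lam m E1 * q2)"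
    using u_left[OF sa ra ev(1)] unfolding u lc_smult by (simp add: lc_def)
  then have U1: "q1 * k1 + q2 * k5 = lam m E1 * q1 \<and> q1 * k2 + q2 * k6 = lam m E1 * q2"
    unfolding prod_frame[OF sa fr] lc_eq_iff[OF dt] by simp
  have "m (lc E1 E2 q1 q2) (lc E1 E2 0 1) = lc E1 E2 (lam m E2 * q1) (lam m E2 * q2)"
    using u_left[OF sa ra ev(2)] unfolding u lc_smult by (simp add: lc_def)
  then have U2: "q1 * k3 + q2 * k7 = lam m E2 * q1 \<and> q1 * k4 + q2 * k8 = lam m E2 * q2"
    unfolding prod_frame[OF sa fr] lc_eq_iff[OF dt] by simp
  show ?thesis using u L R U1 U2 by blast
qed

lemma sqrt_inv: "(q::complex) \<noteq> 0 \<Longrightarrow> \<exists>t. t \<noteq> 0 \<and> t * t * q = 1"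
proof -
  assume q: "q \<noteq> 0"
  define s where "s = csqrt q"
  have ss: "s * s = q" unfolding s_def using power2_csqrt[of q] by (simp add: power2_eq_square)
  then have "s \<noteq> 0" using q by auto
  then show ?thesis using ss q by (intro exI[of _ "1/s"]) (simp add: field_simps)
qed

lemma frame_swap:
  "frame m x y k1 k2 k3 k4 k5 k6 k7 k8 \<Longrightarrow> frame m y x k8 k7 k6 k5 k4 k3 k2 k1"
  unfolding frame_def det2_def lc_def by (auto simp: algebra_simps)

lemma lam_lc: "superalgebra m \<Longrightarrow> lam m (lc x y a b) = a * lam m x + b * lam m y"
  unfolding lc_def by (rule lam_lin)
lemma rho_lc: "superalgebra m \<Longrightarrow> rho m (lc x y a b) = a * rho m x + b * rho m y"
  unfolding lc_def by (rule rho_lin)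

lemma idem01: "(x::complex) = x * x \<Longrightarrow> x = 0 \<or> x = 1"
  by (metis mult_cancel_right1 mult_eq_0_iff)

lemma type_N:
  assumes sa: "superalgebra m" and ra: "right_alternative m" and fr: "frame m E1 E2 0 1 0 0 0 0 0 0"
  shows "\<exists>T\<in>set R_list. super_iso m (mult_of T)"
proof -
  obtain q1 q2 where u: "m f0 f0 = lc E1 E2 q1 q2" and c: "lam m E1 = 0" "lam m E2 = 0"
      "rho m E1 = 0" "rho m E2 = 0" "q1 = 0"
    using odd_constraints[OF sa ra fr] by auto
  show ?thesis
  proof (cases "q2 = 0")
    case True
    show ?thesis by (rule fin_R37[where t=1 and wa=q1 and wb=q2, OF sa fr]) (use c u True in simp_all)
  next
    case False
    then obtain t where t: "t \<noteq> 0" "t * t * q2 = 1" using sqrt_inv by blast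
    show ?thesis by (rule fin_R38[where t=t and wa=q1 and wb=q2, OF sa fr]) (use c u t in simp_all)
  qed
qed

lemma lc_swap: "lc x y a b = lc y x b a" unfolding lc_def by (simp add: add.commute)

lemma type_C0:
  assumes sa: "superalgebra m" and ra: "right_alternative m" and fr: "frame m E1 E2 1 0 0 0 0 0 0 0"
  shows "\<exists>T\<in>set R_list. super_iso m (mult_of T)"
proof -
  obtain q1 q2 where u: "m f0 f0 = lc E1 E2 q1 q2" and c: "lam m E2 = 0" "rho m E2 = 0"
      "lam m E1 = lam m E1 * lam m E1" "rho m E1 = rho m E1 * rho m E1" "q1 = lam m E1 * q1" "lam m E1 * q2 = 0"
    using odd_constraints[OF sa ra fr] by auto
  consider "lam m E1 = 0" | "lam m E1 = 1" using idem01[OF c(3)] by blast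
  then show ?thesis
  proof cases
    case l: 1
    then have q1: "q1 = 0" using c by simp
    consider "rho m E1 = 0" | "rho m E1 = 1" using idem01[OF c(4)] by blast
    then show ?thesis
    proof cases
      case p: 1
      show ?thesis
      proof (cases "q2 = 0")
        case True
        show ?thesis by (rule fin_R09[where t=1 and wa=q1 and wb=q2, OF sa fr]) (use c u l p q1 True in simp_all)
      next
        case False
        then obtain t where t: "t \<noteq> 0" "t * t * q2 = 1" using sqrt_inv by blast
        show ?thesis by (rule fin_R10[where t=t and wa=q1 and wb=q2, OF sa fr]) (use c u l p q1 t in simp_all)
      qed
    next
      case p: 2
      show ?thesis
      proof (cases "q2 = 0")
        case True
        show ?thesis by (rule fin_R11[where t=1 and wa=q1 and wb=q2, OF sa fr]) (use c u l p q1 True in simp_all)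
      next
        case False
        then obtain t where t: "t \<noteq> 0" "t * t * q2 = 1" using sqrt_inv by blast
        show ?thesis by (rule fin_R12[where t=t and wa=q1 and wb=q2, OF sa fr]) (use c u l p q1 t in simp_all)
      qed
    qed
  next
    case l: 2
    then have q2: "q2 = 0" using c by simp
    consider "rho m E1 = 0" | "rho m E1 = 1" using idem01[OF c(4)] by blast
    then show ?thesis
    proof cases
      case p: 1
      show ?thesis
      proof (cases "q1 = 0")
        case True
        show ?thesis by (rule fin_R13[where t=1 and wa=q1 and wb=q2, OF sa fr]) (use c u l p q2 True in simp_all)
      next
        case False
        then obtain t where t: "t \<noteq> 0" "t * t * q1 = 1" using sqrt_inv by blast
        show ?thesis by (rule fin_R14[where t=t and wa=q1 and wb=q2, OF sa fr]) (use c u l p q2 t in simp_all)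
      qed
    next
      case p: 2
      show ?thesis
      proof (cases "q1 = 0")
        case True
        show ?thesis by (rule fin_R15[where t=1 and wa=q1 and wb=q2, OF sa fr]) (use c u l p q2 True in simp_all)
      next
        case False
        then obtain t where t: "t \<noteq> 0" "t * t * q1 = 1" using sqrt_inv by blast
        show ?thesis by (rule fin_R16[where t=t and wa=q1 and wb=q2, OF sa fr]) (use c u l p q2 t in simp_all)
      qed
    qed
  qed
qed

lemma type_U:
  assumes sa: "superalgebra m" and ra: "right_alternative m" and fr: "frame m E1 E2 1 0 0 1 0 1 0 0"
  shows "\<exists>T\<in>set R_list. super_iso m (mult_of T)"
proof -
  obtain q1 q2 where u: "m f0 f0 = lc E1 E2 q1 q2" and c: "lam m E2 = 0" "rho m E2 = 0"
      "lam m E1 = lam m E1 * lam m E1" "rho m E1 = rho m E1 * rho m E1" "q1 = 0" "q2 = lam m E1 * q2"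
    using odd_constraints[OF sa ra fr] by auto
  consider "lam m E1 = 0" | "lam m E1 = 1" using idem01[OF c(3)] by blast
  then show ?thesis
  proof cases
    case l: 1
    have q2: "q2 = 0" using c l by simp
    consider "rho m E1 = 0" | "rho m E1 = 1" using idem01[OF c(4)] by blast
    then show ?thesis
    proof cases
      case p: 1
      show ?thesis by (rule fin_R17[where t=1 and wa=q1 and wb=q2, OF sa fr]) (use c u l p q2 in simp_all)
    next
      case p: 2
      show ?thesis by (rule fin_R20[where t=1 and wa=q1 and wb=q2, OF sa fr]) (use c u l p q2 in simp_all)
    qed
  next
    case l: 2
    consider "rho m E1 = 0" | "rho m E1 = 1" using idem01[OF c(4)] by blast
    then show ?thesis
    proof cases
      case p: 1
      show ?thesis
      proof (cases "q2 = 0")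
        case True
        show ?thesis by (rule fin_R18[where t=1 and wa=q1 and wb=q2, OF sa fr]) (use c u l p True in simp_all)
      next
        case False
        then obtain t where t: "t \<noteq> 0" "t * t * q2 = 1" using sqrt_inv by blast
        show ?thesis by (rule fin_R19[where t=t and wa=q1 and wb=q2, OF sa fr]) (use c u l p t in simp_all)
      qed
    next
      case p: 2
      show ?thesis
      proof (cases "q2 = 0")
        case True
        show ?thesis by (rule fin_R21[where t=1 and wa=q1 and wb=q2, OF sa fr]) (use c u l p True in simp_all)
      next
        case False
        then obtain t where t: "t \<noteq> 0" "t * t * q2 = 1" using sqrt_inv by blast
        show ?thesis by (rule fin_R22[where t=t and wa=q1 and wb=q2, OF sa fr]) (use c u l p t in simp_all)
      qed
    qed
  qed
qed

lemma type_L: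
  assumes sa: "superalgebra m" and ra: "right_alternative m" and fr: "frame m E1 E2 1 0 0 1 0 0 0 0"
  shows "\<exists>T\<in>set R_list. super_iso m (mult_of T)"
proof -
  obtain q1 q2 where u: "m f0 f0 = lc E1 E2 q1 q2" and c: "lam m E2 = 0" "rho m E2 = 0"
      "lam m E1 = lam m E1 * lam m E1" "rho m E1 = rho m E1 * rho m E1" "q1 = 0" "lam m E1 * q2 = 0"
    using odd_constraints[OF sa ra fr] by auto
  consider "lam m E1 = 0" | "lam m E1 = 1" using idem01[OF c(3)] by blast
  then show ?thesis
  proof cases
    case l: 1
    consider "rho m E1 = 0" | "rho m E1 = 1" using idem01[OF c(4)] by blast
    then show ?thesis
    proof cases
      case p: 1
      show ?thesis
      proof (cases "q2 = 0")
        case True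
        show ?thesis by (rule fin_R23[where t=1 and wa=q1 and wb=q2, OF sa fr]) (use c u l p True in simp_all)
      next
        case False
        then obtain t where t: "t \<noteq> 0" "t * t * q2 = 1" using sqrt_inv by blast
        show ?thesis by (rule fin_R24[where t=t and wa=q1 and wb=q2, OF sa fr]) (use c u l p t in simp_all)
      qed
    next
      case p: 2
      show ?thesis
      proof (cases "q2 = 0")
        case True
        show ?thesis by (rule fin_R29[where t=1 and wa=q1 and wb=q2, OF sa fr]) (use c u l p True in simp_all)
      next
        case False
        then obtain t where t: "t \<noteq> 0" "t * t * q2 = 1" using sqrt_inv by blast
        show ?thesis by (rule fin_R30[where t=t and wa=q1 and wb=q2, OF sa fr]) (use c u l p t in simp_all)
      qed
    qed
  next
    case l: 2
    have q2: "q2 = 0" using c l by simp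
    consider "rho m E1 = 0" | "rho m E1 = 1" using idem01[OF c(4)] by blast
    then show ?thesis
    proof cases
      case p: 1
      show ?thesis by (rule fin_R32[where t=1 and wa=q1 and wb=q2, OF sa fr]) (use c u l p q2 in simp_all)
    next
      case p: 2
      show ?thesis by (rule fin_R36[where t=1 and wa=q1 and wb=q2, OF sa fr]) (use c u l p q2 in simp_all)
    qed
  qed
qed

lemma type_R:
  assumes sa: "superalgebra m" and ra: "right_alternative m" and fr: "frame m E1 E2 1 0 0 0 0 1 0 0"
  shows "\<exists>T\<in>set R_list. super_iso m (mult_of T)"
proof -
  obtain q1 q2 where u: "m f0 f0 = lc E1 E2 q1 q2" and c: "lam m E2 = 0" "rho m E2 = 0"
      "lam m E1 = lam m E1 * lam m E1" "rho m E1 = rho m E1 * rho m E1" "q1 = lam m E1 * q1" "q2 = lam m E1 * q2"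
    using odd_constraints[OF sa ra fr] by auto
  consider "lam m E1 = 0" | "lam m E1 = 1" using idem01[OF c(3)] by blast
  then show ?thesis
  proof cases
    case l: 1
    have q: "q1 = 0" "q2 = 0" using c l by simp_all
    consider "rho m E1 = 0" | "rho m E1 = 1" using idem01[OF c(4)] by blast
    then show ?thesis
    proof cases
      case p: 1
      show ?thesis by (rule fin_R25[where t=1 and wa=q1 and wb=q2, OF sa fr]) (use c u l p q in simp_all)
    next
      case p: 2
      show ?thesis by (rule fin_R31[where t=1 and wa=q1 and wb=q2, OF sa fr]) (use c u l p q in simp_all)
    qed
  next
    case l: 2
    consider "rho m E1 = 0" | "rho m E1 = 1" using idem01[OF c(4)] by blast
    then show ?thesis
    proof cases
      case p: 1
      show ?thesis
      proof (cases "q1 = 0")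
        case q1: True
        show ?thesis
        proof (cases "q2 = 0")
          case True
          show ?thesis by (rule fin_R26[where t=1 and wa=q1 and wb=q2, OF sa fr]) (use c u l p q1 True in simp_all)
        next
          case False
          then obtain t where t: "t \<noteq> 0" "t * t * q2 = 1" using sqrt_inv by blast
          show ?thesis by (rule fin_R28[where t=t and wa=q1 and wb=q2, OF sa fr]) (use c u l p q1 t in simp_all)
        qed
      next
        case q1: False
        define s where "s = q2 / q1"
        have fr2: "frame m (lc E1 E2 1 s) (lc E1 E2 0 1) 1 0 0 0 0 1 0 0"
          by (rule frame_change_arith[OF sa fr]) simp_all
        have u2: "m f0 f0 = lc (lc E1 E2 1 s) (lc E1 E2 0 1) q1 0"
          using u q1 unfolding lc_lc s_def by simp
        obtain t where t: "t \<noteq> 0" "t * t * q1 = 1" using sqrt_inv q1 by blast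
        show ?thesis by (rule fin_R27[where t=t and wa=q1 and wb=0, OF sa fr2]) (use c u2 l p t in \<open>simp_all add: lam_lc[OF sa] rho_lc[OF sa]\<close>)
      qed
    next
      case p: 2
      show ?thesis
      proof (cases "q1 = 0")
        case q1: True
        show ?thesis
        proof (cases "q2 = 0")
          case True
          show ?thesis by (rule fin_R33[where t=1 and wa=q1 and wb=q2, OF sa fr]) (use c u l p q1 True in simp_all)
        next
          case False
          then obtain t where t: "t \<noteq> 0" "t * t * q2 = 1" using sqrt_inv by blast
          show ?thesis by (rule fin_R35[where t=t and wa=q1 and wb=q2, OF sa fr]) (use c u l p q1 t in simp_all)
        qed
      next
        case q1: False
        define s where "s = q2 / q1"
        have fr2: "frame m (lc E1 E2 1 s) (lc E1 E2 0 1) 1 0 0 0 0 1 0 0"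
          by (rule frame_change_arith[OF sa fr]) simp_all
        have u2: "m f0 f0 = lc (lc E1 E2 1 s) (lc E1 E2 0 1) q1 0"
          using u q1 unfolding lc_lc s_def by simp
        obtain t where t: "t \<noteq> 0" "t * t * q1 = 1" using sqrt_inv q1 by blast
        show ?thesis by (rule fin_R34[where t=t and wa=q1 and wb=0, OF sa fr2]) (use c u2 l p t in \<open>simp_all add: lam_lc[OF sa] rho_lc[OF sa]\<close>)
      qed
    qed
  qed
qed

lemma type_CC_a:
  assumes sa: "superalgebra m" and ra: "right_alternative m" and fr: "frame m E1 E2 1 0 0 0 0 0 0 1"
    and l2: "lam m E2 = 0"
  shows "\<exists>T\<in>set R_list. super_iso m (mult_of T)"
proof -
  have frs: "frame m E2 E1 1 0 0 0 0 0 0 1" using frame_swap[OF fr] .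
  obtain q1 q2 where u: "m f0 f0 = lc E1 E2 q1 q2" and c: "lam m E2 = 0" "q2 = 0"
      "lam m E1 = lam m E1 * lam m E1" "rho m E1 = rho m E1 * rho m E1" "rho m E2 = rho m E2 * rho m E2"
      "rho m E1 * rho m E2 = 0" "q1 = lam m E1 * q1"
    using odd_constraints[OF sa ra fr] l2 by auto
  have us: "m f0 f0 = lc E2 E1 q2 q1" using u lc_swap by metis
  consider "lam m E1 = 0" | "lam m E1 = 1" using idem01[OF c(3)] by blast
  then show ?thesis
  proof cases
    case l: 1
    have q: "q1 = 0" using c l by simp
    consider "rho m E1 = 0" "rho m E2 = 0" | "rho m E1 = 1" "rho m E2 = 0" | "rho m E1 = 0" "rho m E2 = 1"
      using idem01[OF c(4)] idem01[OF c(5)] c(6) by force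
    then show ?thesis
    proof cases
      case p: 1
      show ?thesis by (rule fin_R01[where t=1 and wa=q1 and wb=q2, OF sa fr]) (use c u l p q in simp_all)
    next
      case p: 2
      show ?thesis by (rule fin_R04[where t=1 and wa=q1 and wb=q2, OF sa fr]) (use c u l p q in simp_all)
    next
      case p: 3
      show ?thesis by (rule fin_R04[where t=1 and wa=q2 and wb=q1, OF sa frs]) (use c us l p q in simp_all)
    qed
  next
    case l: 2
    consider "rho m E1 = 0" "rho m E2 = 0" | "rho m E1 = 1" "rho m E2 = 0" | "rho m E1 = 0" "rho m E2 = 1"
      using idem01[OF c(4)] idem01[OF c(5)] c(6) by force
    then show ?thesis
    proof cases
      case p: 1
      show ?thesis
      proof (cases "q1 = 0")
        case True
        show ?thesis by (rule fin_R05[where t=1 and wa=q1 and wb=q2, OF sa fr]) (use c u l p True in simp_all)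
      next
        case False
        then obtain t where t: "t \<noteq> 0" "t * t * q1 = 1" using sqrt_inv by blast
        show ?thesis by (rule fin_R06[where t=t and wa=q1 and wb=q2, OF sa fr]) (use c u l p t in simp_all)
      qed
    next
      case p: 2
      show ?thesis
      proof (cases "q1 = 0")
        case True
        show ?thesis by (rule fin_R02[where t=1 and wa=q1 and wb=q2, OF sa fr]) (use c u l p True in simp_all)
      next
        case False
        then obtain t where t: "t \<noteq> 0" "t * t * q1 = 1" using sqrt_inv by blast
        show ?thesis by (rule fin_R03[where t=t and wa=q1 and wb=q2, OF sa fr]) (use c u l p t in simp_all)
      qed
    next
      case p: 3
      show ?thesis
      proof (cases "q1 = 0")
        case True
        show ?thesis by (rule fin_R07[where t=1 and wa=q2 and wb=q1, OF sa frs]) (use c us l p True in simp_all)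
      next
        case False
        then obtain t where t: "t \<noteq> 0" "t * t * q1 = 1" using sqrt_inv by blast
        show ?thesis by (rule fin_R08[where t=t and wa=q2 and wb=q1, OF sa frs]) (use c us l p t in simp_all)
      qed
    qed
  qed
qed

lemma type_CC:
  assumes sa: "superalgebra m" and ra: "right_alternative m" and fr: "frame m E1 E2 1 0 0 0 0 0 0 1"
  shows "\<exists>T\<in>set R_list. super_iso m (mult_of T)"
proof -
  have frs: "frame m E2 E1 1 0 0 0 0 0 0 1" using frame_swap[OF fr] .
  have c: "lam m E1 = lam m E1 * lam m E1" "lam m E2 = lam m E2 * lam m E2" "lam m E1 * lam m E2 = 0"
    using odd_constraints[OF sa ra fr] by auto
  show ?thesis
  proof (cases "lam m E2 = 0")
    case True
    then show ?thesis using type_CC_a[OF sa ra fr] by blast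
  next
    case False
    then have "lam m E1 = 0" using c by simp
    then show ?thesis using type_CC_a[OF sa ra frs] by blast
  qed
qed

lemma type_Z:
  assumes sa: "superalgebra m" and ra: "right_alternative m" and fr: "frame m E1 E2 0 0 0 0 0 0 0 0"
    and nt: "\<not> trivial m"
  shows "\<exists>T\<in>set R_list. super_iso m (mult_of T)"
proof -
  obtain q1 q2 where u: "m f0 f0 = lc E1 E2 q1 q2" and c: "lam m E1 = 0" "lam m E2 = 0"
      "rho m E1 = 0" "rho m E2 = 0"
    using odd_constraints[OF sa ra fr] by auto
  have ev: "E1 \<in> even_part" "E2 \<in> even_part" using frame_even[OF fr] by auto
  note dt = frame_det[OF fr]
  show ?thesis
  proof (cases "q1 = 0 \<and> q2 = 0")
    case True
    have dec: "\<exists>a b. x = lc E1 E2 a b + (x$3) *s f0" for x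
    proof -
      have "x - (x$3) *s f0 \<in> even_part" unfolding even_part_def by (simp add: f0_3)
      then obtain a b where "x - (x$3) *s f0 = lc E1 E2 a b" using span2[OF ev _ dt] by blast
      then have "x = lc E1 E2 a b + (x$3) *s f0" by (simp add: algebra_simps)
      then show ?thesis by blast
    qed
    have "m x y = 0" for x y
    proof -
      obtain a b where x: "x = lc E1 E2 a b + (x$3) *s f0" using dec by blast
      obtain c d where y: "y = lc E1 E2 c d + (y$3) *s f0" using dec by blast
      have e1: "m (lc E1 E2 a b) (lc E1 E2 c d) = 0" by (simp only: prod_frame[OF sa fr]) (simp add: lc_def)
      have e2: "m (lc E1 E2 a b) f0 = 0" using m_e_f0[OF sa lc_even[OF ev]] c by (simp add: lam_lc[OF sa])
      have e3: "m f0 (lc E1 E2 c d) = 0" using m_f0_e[OF sa lc_even[OF ev]] c by (simp add: rho_lc[OF sa])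
      have e4: "m f0 f0 = 0" using u True by (simp add: lc_def)
      have "m (lc E1 E2 a b + (x$3) *s f0) (lc E1 E2 c d + (y$3) *s f0) = 0"
        by (simp add: sa_bil[OF sa] e1 e2 e3 e4)
      then show ?thesis using x y by metis
    qed
    then have "trivial m" unfolding trivial_def by blast
    then show ?thesis using nt by blast
  next
    case False
    show ?thesis
    proof (cases "q1 = 0")
      case False
      have fr2: "frame m (lc E1 E2 q1 q2) (lc E1 E2 0 1) 0 0 0 0 0 0 0 0"
        by (rule frame_change_arith[OF sa fr]) (use False in simp_all)
      have u2: "m f0 f0 = lc (lc E1 E2 q1 q2) (lc E1 E2 0 1) 1 0" using u by (simp add: lc_lc)
      show ?thesis by (rule fin_R39[where t=1 and wa=1 and wb=0, OF sa fr2]) (use c u2 in \<open>simp_all add: lam_lc[OF sa] rho_lc[OF sa]\<close>)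
    next
      case q1: True
      then have q2: "q2 \<noteq> 0" using False by simp
      have fr2: "frame m (lc E1 E2 0 q2) (lc E1 E2 1 0) 0 0 0 0 0 0 0 0"
        by (rule frame_change_arith[OF sa fr]) (use q2 in simp_all)
      have u2: "m f0 f0 = lc (lc E1 E2 0 q2) (lc E1 E2 1 0) 1 0" using u q1 by (simp add: lc_lc)
      show ?thesis by (rule fin_R39[where t=1 and wa=1 and wb=0, OF sa fr2]) (use c u2 in \<open>simp_all add: lam_lc[OF sa] rho_lc[OF sa]\<close>)
    qed
  qed
qed

theorem theoremA2:
  fixes m :: "sv \<Rightarrow> sv \<Rightarrow> sv"
  assumes "superalgebra m" and "right_alternative m" and "\<not> trivial m"
  shows "\<exists>T \<in> set R_list. super_iso m (mult_of T)"
proof -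
  obtain E1 E2 where "evtype m E1 E2" using even_class[OF assms(1,2)] by blast
  then show ?thesis unfolding evtype_def
    using type_CC[OF assms(1,2)] type_C0[OF assms(1,2)] type_U[OF assms(1,2)] type_L[OF assms(1,2)]
      type_R[OF assms(1,2)] type_N[OF assms(1,2)] type_Z[OF assms(1,2) _ assms(3)] by blast
qed

end
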